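(* Let $q\in\mathbb{R}$ with $q\neq 0$ and let $\hbar\in\mathbb{R}$. Let $\mathcal{H}$ be the unital associative $\mathbb{C}$-algebra generated by $\hat{x},\hat{p},\hat{\Lambda}$ subject to the relations \[ q^{1/2}\hat{x}\hat{p}-q^{-1/2}\hat{p}\hat{x}=i\hbar\hat{\Lambda},\qquad \hat{\Lambda}\hat{x}=q^{-1}\hat{x}\hat{\Lambda},\qquad \hat{\Lambda}\hat{p}=q\hat{p}\hat{\Lambda}. \] Then $\mathcal{H}$ is (via the identity on generators) the iterated Ore extension \[ R=\mathbb{C}[\hat{\Lambda}][\hat{p};\sigma_{\hat{p}},\delta_{\hat{p}}][\hat{x};\sigma_{\hat{x}},\delta_{\hat{x}}] \] whose data are given by \[ \sigma_{\hat{p}}(\hat{\Lambda})=q^{-1}\hat{\Lambda},\quad \delta_{\hat{p}}(\hat{\Lambda})=0,\quad \sigma_{\hat{x}}(\hat{\Lambda})=q\hat{\Lambda},\quad \delta_{\hat{x}}(\hat{\Lambda})=0,\quad \sigma_{\hat{x}}(\hat{p})=q^{-1}\hat{p},\quad \delta_{\hat{x}}(\hat{p})=i\hbar q^{-1/2}\hat{\Lambda}; \] in particular these prescriptions define an automorphism $\sigma_{\hat{p}}$ of $\mathbb{C}[\hat{\Lambda}]$ with $\sigma_{\hat{p}}$-derivation $\delta_{\hat{p}}$, and an automorphism $\sigma_{\hat{x}}$ of $\mathbb{C}[\hat{\Lambda}][\hat{p};\sigma_{\hat{p}},\delta_{\hat{p}}]$ with $\sigma_{\hat{x}}$-derivation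 $\delta_{\hat{x}}$.
   Context: An Ore extension $A[t;\sigma,\delta]$ of a ring $A$, for a ring endomorphism $\sigma$ of $A$ and a $\sigma$-derivation $\delta$ of $A$ (i.e. $\delta(ab)=\sigma(a)\delta(b)+\delta(a)b$), is the ring of polynomials $\sum a_i t^i$ with multiplication determined by $ta=\sigma(a)t+\delta(a)$ for $a\in A$. The algebra above is the $q$-deformed Heisenberg algebra of Wess (position $\hat{x}$, momentum $\hat{p}$, auxiliary generator $\hat{\Lambda}$). *)

theory Defs
  imports "HOL-Algebra.QuotRing" Complex_Main
begin

definition C_ring :: "complex ring" where
  "C_ring = \<lparr>carrier = UNIV, mult = times, one = 1, zero = 0, add = (+)\<rparr>"

text \<open>An element of A[t;sigma,delta] is a finitely supported coefficient function
  f :: nat => A, standing for the polynomial sum_i (f i) t^i (coefficients on the left).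
  Multiplication is determined by t a = sigma(a) t + delta(a).\<close>

definition ore_supp :: "'a ring \<Rightarrow> (nat \<Rightarrow> 'a) \<Rightarrow> nat set" where
  "ore_supp R f = {i. f i \<noteq> \<zero>\<^bsub>R\<^esub>}"

text \<open>Coefficient function of the product t^n a (for a in A).\<close>
fun ore_tmul :: "'a ring \<Rightarrow> ('a \<Rightarrow> 'a) \<Rightarrow> ('a \<Rightarrow> 'a) \<Rightarrow> nat \<Rightarrow> 'a \<Rightarrow> nat \<Rightarrow> 'a" where
  "ore_tmul R \<sigma> \<delta> 0 a = (\<lambda>k. if k = 0 then a else \<zero>\<^bsub>R\<^esub>)"
| "ore_tmul R \<sigma> \<delta> (Suc n) a =
     (\<lambda>k. (if k = 0 then \<zero>\<^bsub>R\<^esub> else \<sigma> (ore_tmul R \<sigma> \<delta> n a (k - 1)))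
            \<oplus>\<^bsub>R\<^esub> \<delta> (ore_tmul R \<sigma> \<delta> n a k))"

text \<open>(sum_i f_i t^i)(sum_j g_j t^j) = sum_{i,j} f_i (t^i g_j) t^j.\<close>
definition ore_mult :: "'a ring \<Rightarrow> ('a \<Rightarrow> 'a) \<Rightarrow> ('a \<Rightarrow> 'a) \<Rightarrow>
    (nat \<Rightarrow> 'a) \<Rightarrow> (nat \<Rightarrow> 'a) \<Rightarrow> nat \<Rightarrow> 'a" where
  "ore_mult R \<sigma> \<delta> f g = (\<lambda>k. finsum R (\<lambda>i. finsum R (\<lambda>j.
       f i \<otimes>\<^bsub>R\<^esub> ore_tmul R \<sigma> \<delta> i (g j) (k - j)) {..k}) (ore_supp R f))"

definition ore_const :: "'a ring \<Rightarrow> 'a \<Rightarrow> nat \<Rightarrow> 'a" where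
  "ore_const R a = (\<lambda>k. if k = 0 then a else \<zero>\<^bsub>R\<^esub>)"

definition ore_var :: "'a ring \<Rightarrow> nat \<Rightarrow> 'a" where
  "ore_var R = (\<lambda>k. if k = 1 then \<one>\<^bsub>R\<^esub> else \<zero>\<^bsub>R\<^esub>)"

definition ore_ext :: "'a ring \<Rightarrow> ('a \<Rightarrow> 'a) \<Rightarrow> ('a \<Rightarrow> 'a) \<Rightarrow> (nat \<Rightarrow> 'a) ring" where
  "ore_ext R \<sigma> \<delta> =
     \<lparr>carrier = {f. (\<forall>i. f i \<in> carrier R) \<and> finite (ore_supp R f)},
      mult = ore_mult R \<sigma> \<delta>,
      one = ore_const R \<one>\<^bsub>R\<^esub>,
      zero = (\<lambda>k. \<zero>\<^bsub>R\<^esub>),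
      add = (\<lambda>f g k. f k \<oplus>\<^bsub>R\<^esub> g k)\<rparr>"

definition sigma_derivation :: "'a ring \<Rightarrow> ('a \<Rightarrow> 'a) \<Rightarrow> ('a \<Rightarrow> 'a) \<Rightarrow> bool" where
  "sigma_derivation R \<sigma> \<delta> \<longleftrightarrow>
     \<delta> \<in> carrier R \<rightarrow> carrier R \<and>
     (\<forall>a\<in>carrier R. \<forall>b\<in>carrier R.
        \<delta> (a \<oplus>\<^bsub>R\<^esub> b) = \<delta> a \<oplus>\<^bsub>R\<^esub> \<delta> b \<and>
        \<delta> (a \<otimes>\<^bsub>R\<^esub> b) = \<sigma> a \<otimes>\<^bsub>R\<^esub> \<delta> b \<oplus>\<^bsub>R\<^esub> \<delta> a \<otimes>\<^bsub>R\<^esub> b)"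

datatype hgen = GenX | GenP | GenL

definition free_alg :: "(hgen list \<Rightarrow> complex) ring" where
  "free_alg = \<lparr>carrier = {f. finite {w. f w \<noteq> 0}},
     mult = (\<lambda>f g w. \<Sum>i\<le>length w. f (take i w) * g (drop i w)),
     one = (\<lambda>w. if w = [] then 1 else 0),
     zero = (\<lambda>w. 0),
     add = (\<lambda>f g w. f w + g w)\<rparr>"

definition fa_scalar :: "complex \<Rightarrow> hgen list \<Rightarrow> complex" where
  "fa_scalar c = (\<lambda>w. if w = [] then c else 0)"

definition fa_gen :: "hgen \<Rightarrow> hgen list \<Rightarrow> complex" where
  "fa_gen g = (\<lambda>w. if w = [g] then 1 else 0)"

text \<open>q^(1/2) is taken as the principal complex square root of q; q^(-1/2) = 1 / q^(1/2).\<close>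
definition qhalf :: "real \<Rightarrow> complex" where
  "qhalf q = csqrt (complex_of_real q)"

definition heis_rels :: "real \<Rightarrow> real \<Rightarrow> (hgen list \<Rightarrow> complex) set" where
  "heis_rels q hbar =
    (let X = fa_gen GenX; P = fa_gen GenP; L = fa_gen GenL; s = qhalf q;
         m = mult free_alg in
     { (\<lambda>w. s * m X P w - (1 / s) * m P X w - \<i> * complex_of_real hbar * L w),
       (\<lambda>w. m L X w - complex_of_real (1 / q) * m X L w),
       (\<lambda>w. m L P w - complex_of_real q * m P L w) })"

definition Heis :: "real \<Rightarrow> real \<Rightarrow> (hgen list \<Rightarrow> complex) set ring" where
  "Heis q hbar = free_alg Quot (genideal free_alg (heis_rels q hbar))"

definition heis_class :: "real \<Rightarrow> real \<Rightarrow> (hgen list \<Rightarrow> complex) \<Rightarrow> (hgen list \<Rightarrow> complex) set" where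
  "heis_class q hbar f = genideal free_alg (heis_rels q hbar) +>\<^bsub>free_alg\<^esub> f"

end

theory Submission
  imports Defs "HOL-Library.Function_Algebras"
begin

definition oT :: "('a \<Rightarrow> 'a) \<Rightarrow> ('a \<Rightarrow> 'a) \<Rightarrow> (nat \<Rightarrow> 'a::ab_group_add) \<Rightarrow> nat \<Rightarrow> 'a" where
  "oT s d m = (\<lambda>k. (if k = 0 then 0 else s (m (k - 1))) + d (m k))"

definition bnd :: "nat \<Rightarrow> (nat \<Rightarrow> 'a::zero) \<Rightarrow> bool" where
  "bnd n m \<longleftrightarrow> (\<forall>k>n. m k = 0)"

lemma bnd_mono: "bnd n m \<Longrightarrow> n \<le> n' \<Longrightarrow> bnd n' m"
  unfolding bnd_def by auto

lemma finite_supp_bnd: "finite {i. m i \<noteq> (0::'a::zero)} \<longleftrightarrow> (\<exists>n. bnd n m)"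
proof
  assume "finite {i. m i \<noteq> 0}"
  then obtain n where "\<forall>i\<in>{i. m i \<noteq> 0}. i \<le> n" using finite_nat_set_iff_bounded_le by blast
  then show "\<exists>n. bnd n m" unfolding bnd_def by (metis leD mem_Collect_eq)
next
  assume "\<exists>n. bnd n m"
  then obtain n where "bnd n m" by blast
  then have "{i. m i \<noteq> 0} \<subseteq> {..n}" unfolding bnd_def by (auto simp: not_less[symmetric])
  then show "finite {i. m i \<noteq> 0}" using finite_subset by blast
qed

locale oreA = ring A for A :: "('a::ab_group_add) ring" (structure) +
  fixes \<sigma> \<delta> :: "'a \<Rightarrow> 'a"
  assumes addA: "add A = (+)" and zeroA: "zero A = 0"
    and hom: "\<sigma> \<in> ring_hom A A" and der: "sigma_derivation A \<sigma> \<delta>"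
begin

lemma add_eq[simp]: "x \<oplus> y = x + y"
  by (simp add: addA)

lemma zero_eq[simp]: "\<zero> = 0"
  by (simp add: zeroA)

lemma car_add[intro, simp]: "x \<in> carrier A \<Longrightarrow> y \<in> carrier A \<Longrightarrow> x + y \<in> carrier A"
  using a_closed[of x y] by (simp only: add_eq)

lemma car_0[intro, simp]: "0 \<in> carrier A"
  using zero_closed by (simp only: zero_eq)

lemma oneg_eq: "x \<in> carrier A \<Longrightarrow> \<ominus> x = - x"
proof -
  assume x: "x \<in> carrier A"
  have "x + \<ominus> x = 0" using r_neg[OF x] by (simp only: add_eq zero_eq)
  then show ?thesis by (simp add: add_eq_0_iff)
qed

lemma car_uminus[intro, simp]: "x \<in> carrier A \<Longrightarrow> - x \<in> carrier A"
proof -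
  assume x: "x \<in> carrier A"
  show ?thesis using a_inv_closed[OF x] oneg_eq[OF x] by simp
qed

lemma car_diff[intro, simp]: "x \<in> carrier A \<Longrightarrow> y \<in> carrier A \<Longrightarrow> x - y \<in> carrier A"
  by (metis car_add car_uminus diff_conv_add_uminus)

lemma car_sum[intro]: "(\<And>i. i \<in> S \<Longrightarrow> f i \<in> carrier A) \<Longrightarrow> sum f S \<in> carrier A"
  by (induct S rule: infinite_finite_induct) auto

lemma mult_sum_r: "a \<in> carrier A \<Longrightarrow> (\<And>i. i \<in> S \<Longrightarrow> f i \<in> carrier A) \<Longrightarrow>
    a \<otimes> sum f S = (\<Sum>i\<in>S. a \<otimes> f i)"
proof (induct S rule: infinite_finite_induct)
  case (insert x F)
  then show ?case using r_distr[of "f x" "sum f F" a] car_sum[of F f] by simp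
qed (use r_null in auto)

lemma mult_sum_l: "a \<in> carrier A \<Longrightarrow> (\<And>i. i \<in> S \<Longrightarrow> f i \<in> carrier A) \<Longrightarrow>
    sum f S \<otimes> a = (\<Sum>i\<in>S. f i \<otimes> a)"
proof (induct S rule: infinite_finite_induct)
  case (insert x F)
  then show ?case using l_distr[of "f x" "sum f F" a] car_sum[of F f] by simp
qed (use l_null in auto)

lemma finsum_eq: "f \<in> S \<rightarrow> carrier A \<Longrightarrow> finsum A f S = sum f S"
proof (induct S rule: infinite_finite_induct)
  case (insert x F)
  then show ?case by (simp add: finsum_insert)
qed auto

lemma sig_car[intro, simp]: "x \<in> carrier A \<Longrightarrow> \<sigma> x \<in> carrier A"
  using hom unfolding ring_hom_def by blast
lemma sig_add: "x \<in> carrier A \<Longrightarrow> y \<in> carrier A \<Longrightarrow> \<sigma> (x + y) = \<sigma> x + \<sigma> y"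
proof -
  assume x: "x \<in> carrier A" and y: "y \<in> carrier A"
  have "\<sigma> (x \<oplus> y) = \<sigma> x \<oplus> \<sigma> y" using hom x y unfolding ring_hom_def by blast
  then show ?thesis by (simp only: add_eq)
qed
lemma sig_mult: "x \<in> carrier A \<Longrightarrow> y \<in> carrier A \<Longrightarrow> \<sigma> (x \<otimes> y) = \<sigma> x \<otimes> \<sigma> y"
  using hom unfolding ring_hom_def by blast
lemma sig_one[simp]: "\<sigma> \<one> = \<one>"
  using hom unfolding ring_hom_def by blast
lemma sig_zero[simp]: "\<sigma> 0 = 0"
proof -
  have "\<sigma> 0 = \<sigma> 0 + \<sigma> 0" using sig_add[of 0 0] car_0 by (simp only: add_0_right)
  then show ?thesis by (metis add_cancel_right_right)
qed
lemma sig_sum: "(\<And>i. i \<in> S \<Longrightarrow> f i \<in> carrier A) \<Longrightarrow> \<sigma> (sum f S) = (\<Sum>i\<in>S. \<sigma> (f i))"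
proof (induct S rule: infinite_finite_induct)
  case (insert x F)
  then show ?case using sig_add[of "f x" "sum f F"] car_sum[of F f] by simp
qed simp_all

lemma del_car[intro, simp]: "x \<in> carrier A \<Longrightarrow> \<delta> x \<in> carrier A"
  using der unfolding sigma_derivation_def by blast
lemma del_add: "x \<in> carrier A \<Longrightarrow> y \<in> carrier A \<Longrightarrow> \<delta> (x + y) = \<delta> x + \<delta> y"
proof -
  assume x: "x \<in> carrier A" and y: "y \<in> carrier A"
  have "\<delta> (x \<oplus> y) = \<delta> x \<oplus> \<delta> y" using der x y unfolding sigma_derivation_def by blast
  then show ?thesis by (simp only: add_eq)
qed
lemma del_mult: "x \<in> carrier A \<Longrightarrow> y \<in> carrier A \<Longrightarrow> \<delta> (x \<otimes> y) = \<sigma> x \<otimes> \<delta> y + \<delta> x \<otimes> y"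
proof -
  assume x: "x \<in> carrier A" and y: "y \<in> carrier A"
  have "\<delta> (x \<otimes> y) = \<sigma> x \<otimes> \<delta> y \<oplus> \<delta> x \<otimes> y" using der x y unfolding sigma_derivation_def by blast
  then show ?thesis by (simp only: add_eq)
qed
lemma del_zero: "\<delta> 0 = 0"
proof -
  have "\<delta> 0 = \<delta> 0 + \<delta> 0" using del_add[of 0 0] car_0 by (simp only: add_0_right)
  then show ?thesis by (metis add_cancel_right_right)
qed
lemma del_one: "\<delta> \<one> = 0"
proof -
  have "\<delta> \<one> = \<delta> \<one> + \<delta> \<one>" using del_mult[of \<one> \<one>] one_closed del_car[of \<one>]
    by (simp only: l_one r_one sig_one)
  then show ?thesis by (metis add_cancel_right_right)
qed
lemma del_sum: "(\<And>i. i \<in> S \<Longrightarrow> f i \<in> carrier A) \<Longrightarrow> \<delta> (sum f S) = (\<Sum>i\<in>S. \<delta> (f i))"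
proof (induct S rule: infinite_finite_induct)
  case (insert x F)
  then show ?case using del_add[of "f x" "sum f F"] car_sum[of F f] by simp
qed (simp_all add: del_zero)

lemmas del_simps = del_zero del_one

abbreviation "E \<equiv> ore_ext A \<sigma> \<delta>"
abbreviation "T \<equiv> oT \<sigma> \<delta>"

lemma E_car: "carrier E = {f. (\<forall>i. f i \<in> carrier A) \<and> (\<exists>n. bnd n f)}"
  unfolding ore_ext_def ore_supp_def by (simp add: finite_supp_bnd)

lemma E_add: "add E = (+)"
  unfolding ore_ext_def by (auto simp: fun_eq_iff)

lemma E_zero: "zero E = 0"
  unfolding ore_ext_def by (auto simp: fun_eq_iff)

lemma E_one: "one E = ore_const A \<one>"
  unfolding ore_ext_def by simp

lemma E_mult: "mult E = ore_mult A \<sigma> \<delta>"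
  unfolding ore_ext_def by simp

lemma T_apply: "T m k = (if k = 0 then 0 else \<sigma> (m (k - 1))) + \<delta> (m k)"
  unfolding oT_def by simp

lemma Tp_Suc: "(T ^^ Suc i) g = T ((T ^^ i) g)"
  by simp

lemma T_car: "(\<And>i. m i \<in> carrier A) \<Longrightarrow> T m k \<in> carrier A"
  unfolding oT_def by auto

lemma Tp_car: "(\<And>i. m i \<in> carrier A) \<Longrightarrow> (T ^^ n) m k \<in> carrier A"
  by (induct n arbitrary: k) (auto intro: T_car)

lemma T_bnd: "(\<And>i. m i \<in> carrier A) \<Longrightarrow> bnd n m \<Longrightarrow> bnd (Suc n) (T m)"
  unfolding oT_def bnd_def by (auto simp: del_simps)

lemma Tp_bnd: "(\<And>i. m i \<in> carrier A) \<Longrightarrow> bnd n m \<Longrightarrow> bnd (n + i) ((T ^^ i) m)"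
  by (induct i) (auto intro: T_bnd Tp_car)

lemma T_add: "(\<And>i. m i \<in> carrier A) \<Longrightarrow> (\<And>i. m' i \<in> carrier A) \<Longrightarrow> T (m + m') = T m + T m'"
  unfolding oT_def by (auto simp: fun_eq_iff sig_add del_add algebra_simps)

lemma Tp_add: "(\<And>i. m i \<in> carrier A) \<Longrightarrow> (\<And>i. m' i \<in> carrier A) \<Longrightarrow>
   (T ^^ n) (m + m') = (T ^^ n) m + (T ^^ n) m'"
  by (induct n) (auto simp: T_add Tp_car)

lemma tmul_Suc: "ore_tmul A \<sigma> \<delta> (Suc n) a = (\<lambda>k. (if k = 0 then 0 else \<sigma> (ore_tmul A \<sigma> \<delta> n a (k - 1))) + \<delta> (ore_tmul A \<sigma> \<delta> n a k))"
  by (simp only: ore_tmul.simps zeroA addA)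

lemma tmul_0: "ore_tmul A \<sigma> \<delta> 0 a = (\<lambda>k. if k = 0 then a else 0)"
  by (simp only: ore_tmul.simps zeroA)

lemma tmul_eq: "ore_tmul A \<sigma> \<delta> n a = (T ^^ n) (ore_const A a)"
  by (induct n) (auto simp: ore_const_def oT_def fun_eq_iff)

lemma const_car: "a \<in> carrier A \<Longrightarrow> ore_const A a i \<in> carrier A"
  unfolding ore_const_def by auto

lemma tmul_car: "a \<in> carrier A \<Longrightarrow> ore_tmul A \<sigma> \<delta> n a k \<in> carrier A"
  unfolding tmul_eq by (rule Tp_car) (rule const_car)

lemma Tp_coef: "(\<And>j. g j \<in> carrier A) \<Longrightarrow>
   (T ^^ i) g k = (\<Sum>j\<le>k. ore_tmul A \<sigma> \<delta> i (g j) (k - j))"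
proof (induct i arbitrary: k)
  case 0
  have "(\<Sum>j\<le>k. ore_tmul A \<sigma> \<delta> 0 (g j) (k - j)) = (\<Sum>j\<le>k. if j = k then g j else 0)"
    by (rule sum.cong) auto
  then show ?case by simp
next
  case (Suc i)
  have tc: "\<And>j m. ore_tmul A \<sigma> \<delta> i (g j) m \<in> carrier A" by (rule tmul_car) (rule Suc.prems)
  have "(\<Sum>j\<le>k. ore_tmul A \<sigma> \<delta> (Suc i) (g j) (k - j)) =
     (\<Sum>j\<le>k. (if k - j = 0 then 0 else \<sigma> (ore_tmul A \<sigma> \<delta> i (g j) (k - j - 1))))
     + (\<Sum>j\<le>k. \<delta> (ore_tmul A \<sigma> \<delta> i (g j) (k - j)))"
    by (simp add: sum.distrib tmul_Suc del: ore_tmul.simps)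
  also have "(\<Sum>j\<le>k. \<delta> (ore_tmul A \<sigma> \<delta> i (g j) (k - j))) = \<delta> ((T ^^ i) g k)"
    by (simp add: Suc.hyps Suc.prems del_sum tc)
  also have "(\<Sum>j\<le>k. (if k - j = 0 then 0 else \<sigma> (ore_tmul A \<sigma> \<delta> i (g j) (k - j - 1))))
      = (if k = 0 then 0 else \<sigma> ((T ^^ i) g (k - 1)))"
  proof (cases k)
    case (Suc k')
    have "(\<Sum>j\<le>k. (if k - j = 0 then 0 else \<sigma> (ore_tmul A \<sigma> \<delta> i (g j) (k - j - 1))))
       = (\<Sum>j\<le>k'. \<sigma> (ore_tmul A \<sigma> \<delta> i (g j) (k' - j)))"
      unfolding Suc by (simp add: Suc_diff_le)
    also have "\<dots> = \<sigma> ((T ^^ i) g k')"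
      by (simp add: Suc.hyps Suc.prems sig_sum tc)
    finally show ?thesis using Suc by simp
  qed simp
  finally have X: "(\<Sum>j\<le>k. ore_tmul A \<sigma> \<delta> (Suc i) (g j) (k - j)) =
     (if k = 0 then 0 else \<sigma> ((T ^^ i) g (k - 1))) + \<delta> ((T ^^ i) g k)" .
  have eq: "(T ^^ Suc i) g k = (if k = 0 then 0 else \<sigma> ((T ^^ i) g (k - 1))) + \<delta> ((T ^^ i) g k)"
    unfolding Tp_Suc by (rule T_apply)
  show ?case by (rule trans[OF eq X[symmetric]])
qed


lemma mult_0l[simp]: "x \<in> carrier A \<Longrightarrow> 0 \<otimes> x = 0"
  using l_null[of x] by (simp only: zero_eq)
lemma mult_0r[simp]: "x \<in> carrier A \<Longrightarrow> x \<otimes> 0 = 0"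
  using r_null[of x] by (simp only: zero_eq)
lemma rd: "a \<in> carrier A \<Longrightarrow> x \<in> carrier A \<Longrightarrow> y \<in> carrier A \<Longrightarrow> a \<otimes> (x + y) = a \<otimes> x + a \<otimes> y"
  using r_distr[of x y a] by (simp only: add_eq)
lemma ld: "a \<in> carrier A \<Longrightarrow> x \<in> carrier A \<Longrightarrow> y \<in> carrier A \<Longrightarrow> (x + y) \<otimes> a = x \<otimes> a + y \<otimes> a"
  using l_distr[of x y a] by (simp only: add_eq)

lemma E_memI: "(\<And>i. f i \<in> carrier A) \<Longrightarrow> bnd n f \<Longrightarrow> f \<in> carrier E"
  unfolding E_car by blast
lemma E_memD: "f \<in> carrier E \<Longrightarrow> f i \<in> carrier A"
  unfolding E_car by blast
lemma E_bnd: "f \<in> carrier E \<Longrightarrow> \<exists>n. bnd n f"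
  unfolding E_car by blast

lemma T_E: "f \<in> carrier E \<Longrightarrow> T f \<in> carrier E"
  using E_bnd[of f] E_memD[of f] T_bnd[of f] T_car[of f] by (meson E_memI)

lemma Tp_E: "f \<in> carrier E \<Longrightarrow> (T ^^ i) f \<in> carrier E"
  by (induct i) (auto intro: T_E)

lemma mult_char:
  assumes f: "f \<in> carrier E" and g: "\<And>j. g j \<in> carrier A" and N: "bnd N f"
  shows "ore_mult A \<sigma> \<delta> f g k = (\<Sum>i\<le>N. f i \<otimes> (T ^^ i) g k)"
proof -
  have fi: "\<And>i. f i \<in> carrier A" using f by (rule E_memD)
  have inner: "finsum A (\<lambda>j. f i \<otimes> ore_tmul A \<sigma> \<delta> i (g j) (k - j)) {..k} = f i \<otimes> (T ^^ i) g k" for i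
  proof -
    have "finsum A (\<lambda>j. f i \<otimes> ore_tmul A \<sigma> \<delta> i (g j) (k - j)) {..k}
        = (\<Sum>j\<le>k. f i \<otimes> ore_tmul A \<sigma> \<delta> i (g j) (k - j))"
      by (rule finsum_eq) (auto intro!: m_closed fi tmul_car g)
    also have "\<dots> = f i \<otimes> (\<Sum>j\<le>k. ore_tmul A \<sigma> \<delta> i (g j) (k - j))"
      by (rule mult_sum_r[symmetric]) (auto intro!: fi tmul_car g)
    also have "\<dots> = f i \<otimes> (T ^^ i) g k" using Tp_coef[of g i k] g by simp
    finally show ?thesis .
  qed
  have "ore_mult A \<sigma> \<delta> f g k = finsum A (\<lambda>i. f i \<otimes> (T ^^ i) g k) (ore_supp A f)"
    unfolding ore_mult_def using inner by simp
  also have "\<dots> = (\<Sum>i\<in>ore_supp A f. f i \<otimes> (T ^^ i) g k)"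
    by (rule finsum_eq) (auto intro!: m_closed fi Tp_car g)
  also have "\<dots> = (\<Sum>i\<le>N. f i \<otimes> (T ^^ i) g k)"
  proof (rule sum.mono_neutral_left)
    show "ore_supp A f \<subseteq> {..N}" using N unfolding bnd_def ore_supp_def by (auto simp: not_less[symmetric])
    show "\<forall>i\<in>{..N} - ore_supp A f. f i \<otimes> (T ^^ i) g k = 0"
      unfolding ore_supp_def using Tp_car g by auto
  qed simp
  finally show ?thesis .
qed

lemma mult_char_E:
  assumes f: "f \<in> carrier E" and g: "g \<in> carrier E" and N: "bnd N f"
  shows "f \<otimes>\<^bsub>E\<^esub> g = (\<lambda>k. \<Sum>i\<le>N. f i \<otimes> (T ^^ i) g k)"
  unfolding E_mult using mult_char[OF f E_memD[OF g] N] by auto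

lemma mult_bnd:
  assumes f: "f \<in> carrier E" and g: "g \<in> carrier E" and N: "bnd N f" and M: "bnd M g"
  shows "bnd (N + M) (f \<otimes>\<^bsub>E\<^esub> g)"
  unfolding bnd_def
proof (intro allI impI)
  fix k assume k: "N + M < k"
  have "(T ^^ i) g k = 0" if "i \<le> N" for i
    using Tp_bnd[OF E_memD[OF g] M, of i] k that unfolding bnd_def by auto
  then show "(f \<otimes>\<^bsub>E\<^esub> g) k = 0"
    unfolding mult_char_E[OF f g N] using E_memD[OF f] by simp
qed

lemma mult_E: "f \<in> carrier E \<Longrightarrow> g \<in> carrier E \<Longrightarrow> f \<otimes>\<^bsub>E\<^esub> g \<in> carrier E"
proof -
  assume f: "f \<in> carrier E" and g: "g \<in> carrier E"
  obtain N M where N: "bnd N f" and M: "bnd M g" using E_bnd f g by blast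
  show ?thesis
  proof (rule E_memI)
    show "bnd (N + M) (f \<otimes>\<^bsub>E\<^esub> g)" by (rule mult_bnd[OF f g N M])
    fix i show "(f \<otimes>\<^bsub>E\<^esub> g) i \<in> carrier A"
      unfolding mult_char_E[OF f g N]
      by (auto intro!: car_sum m_closed E_memD[OF f] Tp_car E_memD[OF g])
  qed
qed

lemma T_mult:
  assumes f: "f \<in> carrier E" and g: "g \<in> carrier E"
  shows "T (f \<otimes>\<^bsub>E\<^esub> g) = T f \<otimes>\<^bsub>E\<^esub> g"
proof
  fix k
  obtain N where N: "bnd N f" using E_bnd f by blast
  have N1: "bnd (Suc N) (T f)" using T_bnd[OF E_memD[OF f] N] .
  define W where "W i = (T ^^ i) g" for i
  have fi: "\<And>i. f i \<in> carrier A" using f by (rule E_memD)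
  have Wc: "\<And>i k. W i k \<in> carrier A" unfolding W_def using E_memD[OF g] by (rule Tp_car)
  have WS: "W (Suc i) k = (if k = 0 then 0 else \<sigma> (W i (k - 1))) + \<delta> (W i k)" for i k
    unfolding W_def Tp_Suc by (rule T_apply)
  have fS: "f (Suc N) = 0" using N unfolding bnd_def by auto
  have L: "T (f \<otimes>\<^bsub>E\<^esub> g) k = (if k = 0 then 0 else (\<Sum>i\<le>N. \<sigma> (f i) \<otimes> \<sigma> (W i (k - 1))))
        + ((\<Sum>i\<le>N. \<sigma> (f i) \<otimes> \<delta> (W i k)) + (\<Sum>i\<le>N. \<delta> (f i) \<otimes> W i k))"
    unfolding T_apply mult_char_E[OF f g N] W_def[symmetric]
    using fi Wc by (simp add: sig_sum del_sum sig_mult del_mult sum.distrib)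
  have "(T f \<otimes>\<^bsub>E\<^esub> g) k = (\<Sum>i\<le>Suc N. T f i \<otimes> W i k)"
    unfolding mult_char_E[OF T_E[OF f] g N1] W_def by simp
  also have "\<dots> = (\<Sum>i\<le>Suc N. (if i = 0 then 0 else \<sigma> (f (i - 1))) \<otimes> W i k)
       + (\<Sum>i\<le>Suc N. \<delta> (f i) \<otimes> W i k)"
    unfolding T_apply using fi Wc by (simp add: ld sum.distrib)
  also have "(\<Sum>i\<le>Suc N. \<delta> (f i) \<otimes> W i k) = (\<Sum>i\<le>N. \<delta> (f i) \<otimes> W i k)"
    using fS Wc by (simp add: del_simps)
  also have "(\<Sum>i\<le>Suc N. (if i = 0 then 0 else \<sigma> (f (i - 1))) \<otimes> W i k)
      = (\<Sum>i\<le>N. \<sigma> (f i) \<otimes> W (Suc i) k)"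
    unfolding sum.atMost_Suc_shift using Wc by simp
  also have "\<dots> = (\<Sum>i\<le>N. \<sigma> (f i) \<otimes> (if k = 0 then 0 else \<sigma> (W i (k - 1))) + \<sigma> (f i) \<otimes> \<delta> (W i k))"
    unfolding WS using fi Wc by (intro sum.cong refl rd) auto
  also have "\<dots> = (if k = 0 then 0 else (\<Sum>i\<le>N. \<sigma> (f i) \<otimes> \<sigma> (W i (k - 1))))
       + (\<Sum>i\<le>N. \<sigma> (f i) \<otimes> \<delta> (W i k))"
    using fi Wc by (simp add: sum.distrib)
  finally show "T (f \<otimes>\<^bsub>E\<^esub> g) k = (T f \<otimes>\<^bsub>E\<^esub> g) k"
    unfolding L by (simp add: add.assoc)
qed

lemma Tp_mult:
  assumes g: "g \<in> carrier E"
  shows "f \<in> carrier E \<Longrightarrow> (T ^^ i) (f \<otimes>\<^bsub>E\<^esub> g) = (T ^^ i) f \<otimes>\<^bsub>E\<^esub> g"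
proof (induct i arbitrary: f)
  case (Suc i)
  have "(T ^^ Suc i) (f \<otimes>\<^bsub>E\<^esub> g) = (T ^^ i) (T (f \<otimes>\<^bsub>E\<^esub> g))"
    by (simp only: funpow_Suc_right comp_def)
  also have "\<dots> = (T ^^ i) (T f \<otimes>\<^bsub>E\<^esub> g)" using T_mult[OF Suc.prems g] by simp
  also have "\<dots> = (T ^^ i) (T f) \<otimes>\<^bsub>E\<^esub> g" using Suc.hyps[OF T_E[OF Suc.prems]] .
  also have "(T ^^ i) (T f) = (T ^^ Suc i) f" by (simp only: funpow_Suc_right comp_def)
  finally show ?case .
qed simp

lemma E_assoc:
  assumes f: "f \<in> carrier E" and g: "g \<in> carrier E" and h: "h \<in> carrier E"
  shows "(f \<otimes>\<^bsub>E\<^esub> g) \<otimes>\<^bsub>E\<^esub> h = f \<otimes>\<^bsub>E\<^esub> (g \<otimes>\<^bsub>E\<^esub> h)"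
proof
  fix k
  obtain N M where N: "bnd N f" and M: "bnd M g" using E_bnd f g by blast
  have fi: "\<And>i. f i \<in> carrier A" using f by (rule E_memD)
  have Wg: "\<And>i k. (T ^^ i) g k \<in> carrier A" using E_memD[OF g] by (rule Tp_car)
  have Wh: "\<And>i k. (T ^^ i) h k \<in> carrier A" using E_memD[OF h] by (rule Tp_car)
  have bi: "bnd (N + M) ((T ^^ i) g)" if "i \<le> N" for i
    using Tp_bnd[OF E_memD[OF g] M, of i] that by (auto intro: bnd_mono)
  have "(f \<otimes>\<^bsub>E\<^esub> (g \<otimes>\<^bsub>E\<^esub> h)) k = (\<Sum>i\<le>N. f i \<otimes> (T ^^ i) (g \<otimes>\<^bsub>E\<^esub> h) k)"
    unfolding mult_char_E[OF f mult_E[OF g h] N] ..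
  also have "\<dots> = (\<Sum>i\<le>N. f i \<otimes> ((T ^^ i) g \<otimes>\<^bsub>E\<^esub> h) k)"
    using Tp_mult[OF h g] by simp
  also have "\<dots> = (\<Sum>i\<le>N. f i \<otimes> (\<Sum>l\<le>N + M. (T ^^ i) g l \<otimes> (T ^^ l) h k))"
    by (rule sum.cong[OF refl]) (simp add: mult_char_E[OF Tp_E[OF g] h bi])
  also have "\<dots> = (\<Sum>i\<le>N. \<Sum>l\<le>N + M. f i \<otimes> ((T ^^ i) g l \<otimes> (T ^^ l) h k))"
    using fi Wg Wh by (simp add: mult_sum_r)
  also have "\<dots> = (\<Sum>l\<le>N + M. \<Sum>i\<le>N. f i \<otimes> ((T ^^ i) g l \<otimes> (T ^^ l) h k))"
    by (rule sum.swap)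
  also have "\<dots> = (\<Sum>l\<le>N + M. (\<Sum>i\<le>N. f i \<otimes> (T ^^ i) g l) \<otimes> (T ^^ l) h k)"
    using fi Wg Wh by (simp add: mult_sum_l m_assoc)
  also have "\<dots> = ((f \<otimes>\<^bsub>E\<^esub> g) \<otimes>\<^bsub>E\<^esub> h) k"
    unfolding mult_char_E[OF mult_E[OF f g] h mult_bnd[OF f g N M]]
    unfolding mult_char_E[OF f g N] ..
  finally show "((f \<otimes>\<^bsub>E\<^esub> g) \<otimes>\<^bsub>E\<^esub> h) k = (f \<otimes>\<^bsub>E\<^esub> (g \<otimes>\<^bsub>E\<^esub> h)) k" ..
qed

lemma ore_const_eq: "ore_const A a = (\<lambda>k. if k = 0 then a else 0)"
  unfolding ore_const_def zero_eq ..

lemma const_E: "a \<in> carrier A \<Longrightarrow> ore_const A a \<in> carrier E"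
  by (rule E_memI[of _ 0]) (auto simp: const_car bnd_def ore_const_eq)

lemma const_bnd: "bnd 0 (ore_const A a)"
  by (auto simp: bnd_def ore_const_eq)

lemma const_mult: "a \<in> carrier A \<Longrightarrow> g \<in> carrier E \<Longrightarrow> ore_const A a \<otimes>\<^bsub>E\<^esub> g = (\<lambda>k. a \<otimes> g k)"
  unfolding mult_char_E[OF const_E _ const_bnd] by (simp add: ore_const_eq)

lemma Tp_unit: "(T ^^ i) (\<lambda>k. if k = 0 then \<one> else 0) = (\<lambda>k. if k = i then \<one> else 0)"
proof (induct i)
  case (Suc i)
  show ?case unfolding Tp_Suc Suc by (auto simp: T_apply fun_eq_iff del_simps)
qed simp

lemma E_ring: "ring E"
proof (rule ringI)
  show "abelian_group E"
  proof (rule abelian_groupI)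
    fix x y assume x: "x \<in> carrier E" and y: "y \<in> carrier E"
    obtain n m where "bnd n x" "bnd m y" using E_bnd x y by blast
    then have "bnd (max n m) (x + y)" unfolding bnd_def by auto
    then show "x \<oplus>\<^bsub>E\<^esub> y \<in> carrier E" unfolding E_add
      using E_memD[OF x] E_memD[OF y] by (intro E_memI) auto
    show "x \<oplus>\<^bsub>E\<^esub> y = y \<oplus>\<^bsub>E\<^esub> x" unfolding E_add by (simp add: add.commute)
  next
    show "\<zero>\<^bsub>E\<^esub> \<in> carrier E" unfolding E_zero by (rule E_memI[of _ 0]) (auto simp: bnd_def)
  next
    fix x y z show "x \<oplus>\<^bsub>E\<^esub> y \<oplus>\<^bsub>E\<^esub> z = x \<oplus>\<^bsub>E\<^esub> (y \<oplus>\<^bsub>E\<^esub> z)" unfolding E_add by (simp add: add.assoc)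
  next
    fix x show "\<zero>\<^bsub>E\<^esub> \<oplus>\<^bsub>E\<^esub> x = x" unfolding E_add E_zero by simp
  next
    fix x assume x: "x \<in> carrier E"
    obtain n where "bnd n x" using E_bnd x by blast
    then have "bnd n (- x)" unfolding bnd_def by auto
    then have "- x \<in> carrier E" using E_memD[OF x] by (intro E_memI) auto
    then show "\<exists>y\<in>carrier E. y \<oplus>\<^bsub>E\<^esub> x = \<zero>\<^bsub>E\<^esub>" unfolding E_add E_zero
      by (intro bexI[of _ "- x"]) auto
  qed
next
  show "monoid E"
  proof (rule monoidI)
    fix x y assume "x \<in> carrier E" "y \<in> carrier E"
    then show "x \<otimes>\<^bsub>E\<^esub> y \<in> carrier E" by (rule mult_E)
  next
    show "\<one>\<^bsub>E\<^esub> \<in> carrier E" unfolding E_one by (rule const_E) simp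
  next
    fix x y z assume "x \<in> carrier E" "y \<in> carrier E" "z \<in> carrier E"
    then show "x \<otimes>\<^bsub>E\<^esub> y \<otimes>\<^bsub>E\<^esub> z = x \<otimes>\<^bsub>E\<^esub> (y \<otimes>\<^bsub>E\<^esub> z)" by (rule E_assoc)
  next
    fix x assume x: "x \<in> carrier E"
    show "\<one>\<^bsub>E\<^esub> \<otimes>\<^bsub>E\<^esub> x = x" unfolding E_one const_mult[OF one_closed x]
      using E_memD[OF x] by simp
  next
    fix x assume x: "x \<in> carrier E"
    obtain N where N: "bnd N x" using E_bnd x by blast
    have c: "ore_const A \<one> = (\<lambda>k. if k = 0 then \<one> else 0)" by (rule ore_const_eq)
    show "x \<otimes>\<^bsub>E\<^esub> \<one>\<^bsub>E\<^esub> = x"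
    proof
      fix k
      have "(x \<otimes>\<^bsub>E\<^esub> \<one>\<^bsub>E\<^esub>) k = (\<Sum>i\<le>N. x i \<otimes> (T ^^ i) (ore_const A \<one>) k)"
        unfolding E_one mult_char_E[OF x const_E[OF one_closed] N] ..
      also have "\<dots> = (\<Sum>i\<le>N. x i \<otimes> (if k = i then \<one> else 0))"
        unfolding c Tp_unit ..
      also have "\<dots> = (\<Sum>i\<le>N. if i = k then x k else 0)"
        using E_memD[OF x] by (intro sum.cong) auto
      also have "\<dots> = x k" using N unfolding bnd_def by (auto simp: not_less)
      finally show "(x \<otimes>\<^bsub>E\<^esub> \<one>\<^bsub>E\<^esub>) k = x k" .
    qed
  qed
next
  fix x y z assume x: "x \<in> carrier E" and y: "y \<in> carrier E" and z: "z \<in> carrier E"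
  obtain n m where n: "bnd n x" and m: "bnd m y" using E_bnd x y by blast
  have xy: "x + y \<in> carrier E" "bnd (max n m) (x + y)" 
    using n m E_memD[OF x] E_memD[OF y] unfolding bnd_def by (auto intro!: E_memI[of _ "max n m"] simp: bnd_def)
  have Wz: "\<And>i k. (T ^^ i) z k \<in> carrier A" using E_memD[OF z] by (rule Tp_car)
  show "(x \<oplus>\<^bsub>E\<^esub> y) \<otimes>\<^bsub>E\<^esub> z = x \<otimes>\<^bsub>E\<^esub> z \<oplus>\<^bsub>E\<^esub> y \<otimes>\<^bsub>E\<^esub> z"
    unfolding E_add mult_char_E[OF xy(1) z xy(2)] 
      mult_char_E[OF x z bnd_mono[OF n max.cobounded1[of n m]]]
      mult_char_E[OF y z bnd_mono[OF m max.cobounded2[of m n]]]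
    using E_memD[OF x] E_memD[OF y] Wz by (auto simp: fun_eq_iff ld sum.distrib)
  obtain p where p: "bnd p z" using E_bnd z by blast
  show "z \<otimes>\<^bsub>E\<^esub> (x \<oplus>\<^bsub>E\<^esub> y) = z \<otimes>\<^bsub>E\<^esub> x \<oplus>\<^bsub>E\<^esub> z \<otimes>\<^bsub>E\<^esub> y"
    unfolding E_add mult_char_E[OF z xy(1) p] mult_char_E[OF z x p] mult_char_E[OF z y p]
      Tp_add[OF E_memD[OF x] E_memD[OF y]]
    using E_memD[OF z] Tp_car[OF E_memD[OF x]] Tp_car[OF E_memD[OF y]]
    by (auto simp: fun_eq_iff rd sum.distrib)
qed


lemma ore_var_eq: "ore_var A = (\<lambda>k. if k = 1 then \<one> else 0)"
  unfolding ore_var_def zero_eq ..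

lemma var_E: "ore_var A \<in> carrier E"
  by (rule E_memI[of _ 1]) (auto simp: bnd_def ore_var_eq)

lemma var_mult: "g \<in> carrier E \<Longrightarrow> ore_var A \<otimes>\<^bsub>E\<^esub> g = T g"
proof -
  assume g: "g \<in> carrier E"
  have b: "bnd 1 (ore_var A)" by (auto simp: bnd_def ore_var_eq)
  show ?thesis unfolding mult_char_E[OF var_E g b]
    using E_memD[OF g] T_car[of g, OF E_memD[OF g]] by (auto simp: ore_var_eq fun_eq_iff)
qed

lemma const_add: "ore_const A (a + b) = ore_const A a + ore_const A b"
  unfolding ore_const_eq by (auto simp: fun_eq_iff)

lemma const_const: "a \<in> carrier A \<Longrightarrow> b \<in> carrier A \<Longrightarrow>
   ore_const A a \<otimes>\<^bsub>E\<^esub> ore_const A b = ore_const A (a \<otimes> b)"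
  unfolding const_mult[OF _ const_E] by (auto simp: ore_const_eq fun_eq_iff)

lemma Tp_const_central:
  assumes s: "s \<in> carrier A" and ss: "\<sigma> s = s" and ds: "\<delta> s = 0"
  shows "(T ^^ i) (ore_const A s) = (\<lambda>k. if k = i then s else 0)"
proof (induct i)
  case 0 show ?case by (simp add: ore_const_eq)
next
  case (Suc i)
  show ?case unfolding Tp_Suc Suc by (auto simp: T_apply fun_eq_iff ss ds del_simps)
qed

lemma mult_const_central:
  assumes s: "s \<in> carrier A" and ss: "\<sigma> s = s" and ds: "\<delta> s = 0"
    and cen: "\<And>a. a \<in> carrier A \<Longrightarrow> a \<otimes> s = s \<otimes> a" and f: "f \<in> carrier E"
  shows "f \<otimes>\<^bsub>E\<^esub> ore_const A s = ore_const A s \<otimes>\<^bsub>E\<^esub> f"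
proof
  fix k
  obtain N where N: "bnd N f" using E_bnd f by blast
  have "(f \<otimes>\<^bsub>E\<^esub> ore_const A s) k = (\<Sum>i\<le>N. f i \<otimes> (if k = i then s else 0))"
    unfolding mult_char_E[OF f const_E[OF s] N] Tp_const_central[OF s ss ds] ..
  also have "\<dots> = (\<Sum>i\<le>N. if i = k then f k \<otimes> s else 0)"
    using E_memD[OF f] by (intro sum.cong) auto
  also have "\<dots> = f k \<otimes> s" using N s E_memD[OF f] unfolding bnd_def by (auto simp: not_less)
  also have "\<dots> = (ore_const A s \<otimes>\<^bsub>E\<^esub> f) k" unfolding const_mult[OF s f] using cen E_memD[OF f] by simp
  finally show "(f \<otimes>\<^bsub>E\<^esub> ore_const A s) k = (ore_const A s \<otimes>\<^bsub>E\<^esub> f) k" .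
qed

lemma E_oreA_base: "ring E \<and> add E = (+) \<and> zero E = 0"
  using E_ring E_add E_zero by blast

end

lemma sum_fun_apply: "(sum f A) x = sum (\<lambda>i. f i x) A"
  by (induct A rule: infinite_finite_induct) auto

lemma C_ring_simps[simp]: "carrier C_ring = UNIV" "add C_ring = (+)" "zero C_ring = 0"
  "mult C_ring = (*)" "one C_ring = 1"
  unfolding C_ring_def by auto

lemma ring_C: "ring C_ring"
proof (rule ringI)
  show "abelian_group C_ring"
    by (rule abelian_groupI) (auto simp: algebra_simps intro: exI[of _ "- _"])
  show "monoid C_ring" by (rule monoidI) auto
qed (auto simp: algebra_simps)

lemma oreA_C: "oreA C_ring id (\<lambda>_. 0)"
  unfolding oreA_def oreA_axioms_def
  by (auto simp: ring_C ring_hom_def sigma_derivation_def)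

interpretation c0: oreA C_ring id "\<lambda>_. 0 :: complex"
  by (rule oreA_C)

abbreviation "A1 \<equiv> ore_ext C_ring id (\<lambda>_. 0 :: complex)"

lemma A1_car: "carrier A1 = {f. \<exists>n. bnd n f}"
  unfolding c0.E_car by simp

lemma A1_add[simp]: "add A1 = (+)"
  by (rule c0.E_add)
lemma A1_zero[simp]: "zero A1 = 0"
  by (rule c0.E_zero)

lemma A1_one: "one A1 = (\<lambda>k. if k = 0 then 1 else 0)"
  unfolding c0.E_one c0.ore_const_eq by (simp only: C_ring_simps)

lemma c0_Tp: "(oT id (\<lambda>_. 0) ^^ i) g = (\<lambda>k. if i \<le> k then g (k - i) else (0::complex))"
proof (induct i)
  case (Suc i)
  show ?case unfolding c0.Tp_Suc Suc
  proof
    fix k show "oT id (\<lambda>_. 0) (\<lambda>k. if i \<le> k then g (k - i) else 0) k = (if Suc i \<le> k then g (k - Suc i) else 0)"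
      unfolding c0.T_apply by (cases k) simp_all
  qed
qed simp

lemma sum_bnd_ext:
  fixes f :: "nat \<Rightarrow> 'a::comm_ring_1"
  assumes "bnd N f" "N \<le> M"
  shows "(\<Sum>i\<le>N. f i * h i) = (\<Sum>i\<le>M. f i * h i)"
  by (rule sum.mono_neutral_left) (use assms in \<open>auto simp: bnd_def\<close>)

lemma A1_mult: "f \<in> carrier A1 \<Longrightarrow> g \<in> carrier A1 \<Longrightarrow>
   f \<otimes>\<^bsub>A1\<^esub> g = (\<lambda>k. \<Sum>i\<le>k. f i * g (k - i))"
proof
  fix k assume f: "f \<in> carrier A1" and g: "g \<in> carrier A1"
  obtain N where N: "bnd N f" using A1_car f by blast
  have "(f \<otimes>\<^bsub>A1\<^esub> g) k = (\<Sum>i\<le>N. f i * (if i \<le> k then g (k - i) else 0))"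
    unfolding c0.mult_char_E[OF f g N] c0_Tp by simp
  also have "\<dots> = (\<Sum>i\<le>N + k. f i * (if i \<le> k then g (k - i) else 0))"
    by (rule sum_bnd_ext[OF N]) simp
  also have "\<dots> = (\<Sum>i\<le>k. f i * (if i \<le> k then g (k - i) else 0))"
  proof (cases "N \<le> k")
    case True
    then have "bnd k f" using N bnd_mono by blast
    then show ?thesis by (rule sum_bnd_ext[symmetric]) simp
  next
    case False
    show ?thesis
      by (rule sum.mono_neutral_right) auto
  qed
  also have "\<dots> = (\<Sum>i\<le>k. f i * g (k - i))" by simp
  finally show "(f \<otimes>\<^bsub>A1\<^esub> g) k = (\<Sum>i\<le>k. f i * g (k - i))" .
qed

lemma A1_ring: "ring A1" by (rule c0.E_ring)

definition sp :: "real \<Rightarrow> (nat \<Rightarrow> complex) \<Rightarrow> nat \<Rightarrow> complex" where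
  "sp q f = (\<lambda>k. (1 / complex_of_real q) ^ k * f k)"

lemma bnd_scale: "bnd n f \<Longrightarrow> bnd n (\<lambda>k. c k * (f k :: complex))"
  unfolding bnd_def by auto

lemma sp_car: "f \<in> carrier A1 \<Longrightarrow> sp q f \<in> carrier A1"
  unfolding A1_car sp_def using bnd_scale by blast

lemma sp_hom: "sp q \<in> ring_hom A1 A1"
proof (rule ring_hom_memI)
  fix x assume "x \<in> carrier A1" then show "sp q x \<in> carrier A1" by (rule sp_car)
next
  fix x y assume x: "x \<in> carrier A1" and y: "y \<in> carrier A1"
  show "sp q (x \<otimes>\<^bsub>A1\<^esub> y) = sp q x \<otimes>\<^bsub>A1\<^esub> sp q y"
    unfolding A1_mult[OF x y] A1_mult[OF sp_car[OF x] sp_car[OF y]]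
  proof
    fix k
    show "sp q (\<lambda>k. \<Sum>i\<le>k. x i * y (k - i)) k = (\<Sum>i\<le>k. sp q x i * sp q y (k - i))"
      unfolding sp_def sum_distrib_left
      by (rule sum.cong) (auto simp: power_add[symmetric])
  qed
  show "sp q (x \<oplus>\<^bsub>A1\<^esub> y) = sp q x \<oplus>\<^bsub>A1\<^esub> sp q y"
    by (auto simp: sp_def fun_eq_iff algebra_simps)
next
  show "sp q \<one>\<^bsub>A1\<^esub> = \<one>\<^bsub>A1\<^esub>" unfolding A1_one sp_def by auto
qed

lemma sp_iso: "q \<noteq> 0 \<Longrightarrow> sp q \<in> ring_iso A1 A1"
proof -
  assume q: "q \<noteq> 0"
  let ?g = "\<lambda>f k. (complex_of_real q) ^ k * f k"
  have g: "f \<in> carrier A1 \<Longrightarrow> ?g f \<in> carrier A1" for f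
    unfolding A1_car using bnd_scale by blast
  have "bij_betw (sp q) (carrier A1) (carrier A1)"
  proof (rule bij_betw_byWitness[of _ ?g])
    show "\<forall>a\<in>carrier A1. ?g (sp q a) = a" using q by (auto simp: sp_def fun_eq_iff power_mult_distrib[symmetric])
    show "\<forall>a\<in>carrier A1. sp q (?g a) = a" using q by (auto simp: sp_def fun_eq_iff power_mult_distrib[symmetric])
    show "sp q ` carrier A1 \<subseteq> carrier A1" using sp_car by blast
    show "?g ` carrier A1 \<subseteq> carrier A1" using g by blast
  qed
  then show ?thesis unfolding ring_iso_def using sp_hom by blast
qed

lemma sp_der: "sigma_derivation A1 (sp q) (\<lambda>_. 0)"
proof -
  interpret A1r: ring A1 by (rule A1_ring)
  have z: "(0::nat\<Rightarrow>complex) \<in> carrier A1" unfolding A1_car by (auto simp: bnd_def)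
  show ?thesis unfolding sigma_derivation_def
    using z A1r.r_null A1r.l_null sp_car by auto
qed

lemma oreA_A1: "oreA A1 (sp q) (\<lambda>_. 0)"
  unfolding oreA_def oreA_axioms_def using A1_ring sp_hom sp_der by auto


interpretation c1: oreA A1 "sp q" "\<lambda>_. 0" for q
  by (rule oreA_A1)

abbreviation "A2 q \<equiv> ore_ext A1 (sp q) (\<lambda>_. 0)"

lemma A2_add[simp]: "add (A2 q) = (+)"
  by (rule c1.E_add)
lemma A2_zero[simp]: "zero (A2 q) = 0"
  by (rule c1.E_zero)

definition bnd2 :: "nat \<Rightarrow> (nat \<Rightarrow> nat \<Rightarrow> complex) \<Rightarrow> bool" where
  "bnd2 n F \<longleftrightarrow> (\<forall>b a. n < b \<or> n < a \<longrightarrow> F b a = 0)"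

lemma bnd2_mono: "bnd2 n F \<Longrightarrow> n \<le> m \<Longrightarrow> bnd2 m F"
  unfolding bnd2_def by auto

lemma A2_car: "carrier (A2 q) = {F. \<exists>n. bnd2 n F}"
proof (rule equalityI; rule subsetI)
  fix F assume "F \<in> carrier (A2 q)"
  then have F: "\<And>b. \<exists>n. bnd n (F b)" and "\<exists>N. bnd N F"
    unfolding c1.E_car A1_car by auto
  then obtain N where N: "bnd N F" by blast
  obtain nb where nb: "\<And>b. bnd (nb b) (F b)" using F by metis
  define n where "n = max N (Max (nb ` {..N}))"
  have "bnd2 n F" unfolding bnd2_def
  proof (intro allI impI)
    fix b a assume "n < b \<or> n < a"
    then show "F b a = 0"
    proof
      assume "n < b" then have "N < b" unfolding n_def by simp
      then show ?thesis using N unfolding bnd_def by auto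
    next
      assume a: "n < a"
      show ?thesis
      proof (cases "b \<le> N")
        case True
        then have "nb b \<le> Max (nb ` {..N})" by (intro Max_ge) auto
        then have "nb b < a" using a True unfolding n_def by simp
        then show ?thesis using nb[of b] unfolding bnd_def by auto
      next
        case False then show ?thesis using N unfolding bnd_def by auto
      qed
    qed
  qed
  then show "F \<in> {F. \<exists>n. bnd2 n F}" by blast
next
  fix F assume "F \<in> {F. \<exists>n. bnd2 n F}"
  then obtain n where n: "bnd2 n F" by blast
  have "bnd n (F b)" for b using n unfolding bnd2_def bnd_def by auto
  moreover have "bnd n F" using n unfolding bnd2_def bnd_def by (auto simp: fun_eq_iff)
  ultimately show "F \<in> carrier (A2 q)" unfolding c1.E_car A1_car by auto
qed

lemma spp: "(sp q ^^ i) f = (\<lambda>a. (1 / complex_of_real q) ^ (i * a) * f a)"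
  by (induct i) (auto simp: sp_def fun_eq_iff power_add mult.assoc)

lemma c1_Tp: "(oT (sp q) (\<lambda>_. 0) ^^ i) G = (\<lambda>b. if i \<le> b then (sp q ^^ i) (G (b - i)) else 0)"
proof (induct i)
  case (Suc i)
  show ?case unfolding c1.Tp_Suc Suc
  proof
    fix k show "oT (sp q) (\<lambda>_. 0) (\<lambda>b. if i \<le> b then (sp q ^^ i) (G (b - i)) else 0) k
        = (if Suc i \<le> k then (sp q ^^ Suc i) (G (k - Suc i)) else 0)"
      unfolding c1.T_apply by (cases k) (simp_all add: sp_def fun_eq_iff)
  qed
qed simp

lemma A1_mult_0r: "f \<in> carrier A1 \<Longrightarrow> f \<otimes>\<^bsub>A1\<^esub> 0 = 0"
  using c1.mult_0r .

lemma A2_mult: "F \<in> carrier (A2 q) \<Longrightarrow> G \<in> carrier (A2 q) \<Longrightarrow>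
   F \<otimes>\<^bsub>A2 q\<^esub> G = (\<lambda>b a. \<Sum>i\<le>b. \<Sum>l\<le>a. F i l * ((1 / complex_of_real q) ^ (i * (a - l)) * G (b - i) (a - l)))"
proof (intro ext)
  fix b a assume F: "F \<in> carrier (A2 q)" and G: "G \<in> carrier (A2 q)"
  obtain N where N: "bnd N F" using c1.E_bnd F by blast
  have Fi: "\<And>i. F i \<in> carrier A1" using F by (rule c1.E_memD)
  have Gi: "\<And>i. G i \<in> carrier A1" using G by (rule c1.E_memD)
  have Gs: "(sp q ^^ i) (G j) \<in> carrier A1" for i j
  proof -
    obtain n where "bnd n (G j)" using Gi[of j] unfolding A1_car by blast
    then show ?thesis unfolding spp A1_car
      using bnd_scale[of n "G j" "\<lambda>a. (1 / complex_of_real q) ^ (i * a)"] by blast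
  qed
  have "(F \<otimes>\<^bsub>A2 q\<^esub> G) b = (\<Sum>i\<le>N. F i \<otimes>\<^bsub>A1\<^esub> (if i \<le> b then (sp q ^^ i) (G (b - i)) else 0))"
    unfolding c1.mult_char_E[OF F G N] c1_Tp ..
  also have "\<dots> = (\<Sum>i\<le>N + b. if i \<le> b then F i \<otimes>\<^bsub>A1\<^esub> (sp q ^^ i) (G (b - i)) else 0)"
  proof (rule sum.mono_neutral_cong_left)
    show "\<forall>i\<in>{..N + b} - {..N}. (if i \<le> b then F i \<otimes>\<^bsub>A1\<^esub> (sp q ^^ i) (G (b - i)) else 0) = 0"
      using N Gs unfolding bnd_def by (auto simp: c1.mult_0l)
  qed (use Fi A1_mult_0r in auto)
  also have "\<dots> = (\<Sum>i\<le>b. F i \<otimes>\<^bsub>A1\<^esub> (sp q ^^ i) (G (b - i)))"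
    by (rule sum.mono_neutral_cong_right) auto
  finally have "(F \<otimes>\<^bsub>A2 q\<^esub> G) b a = (\<Sum>i\<le>b. (F i \<otimes>\<^bsub>A1\<^esub> (sp q ^^ i) (G (b - i))) a)"
    by (simp add: sum_fun_apply)
  also have "\<dots> = (\<Sum>i\<le>b. \<Sum>l\<le>a. F i l * ((1 / complex_of_real q) ^ (i * (a - l)) * G (b - i) (a - l)))"
    unfolding spp by (rule sum.cong[OF refl]) (simp add: A1_mult[OF Fi Gs[unfolded spp]])
  finally show "(F \<otimes>\<^bsub>A2 q\<^esub> G) b a = (\<Sum>i\<le>b. \<Sum>l\<le>a. F i l * ((1 / complex_of_real q) ^ (i * (a - l)) * G (b - i) (a - l)))" .
qed


definition sx :: "real \<Rightarrow> (nat \<Rightarrow> nat \<Rightarrow> complex) \<Rightarrow> nat \<Rightarrow> nat \<Rightarrow> complex" where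
  "sx q F = (\<lambda>b a. complex_of_real q ^ a * (1 / complex_of_real q) ^ b * F b a)"

definition qn :: "real \<Rightarrow> nat \<Rightarrow> complex" where
  "qn q n = (\<Sum>j<n. (1 / complex_of_real q) ^ (2 * j))"

definition kap :: "real \<Rightarrow> real \<Rightarrow> complex" where
  "kap q hbar = \<i> * complex_of_real hbar / qhalf q"

definition dx :: "real \<Rightarrow> real \<Rightarrow> (nat \<Rightarrow> nat \<Rightarrow> complex) \<Rightarrow> nat \<Rightarrow> nat \<Rightarrow> complex" where
  "dx q hbar F = (\<lambda>b a. if a = 0 then 0
      else kap q hbar * complex_of_real q ^ (a - 1) * qn q (b + 1) * F (b + 1) (a - 1))"

lemma qn_0[simp]: "qn q 0 = 0" unfolding qn_def by simp

lemma qn_add: "qn q (i + m) = qn q i + (1 / complex_of_real q) ^ (2 * i) * qn q m"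
  by (induct m) (auto simp: qn_def algebra_simps power_add)

lemma A2_one: "one (A2 q) = (\<lambda>b a. if b = 0 \<and> a = 0 then 1 else 0)"
  unfolding c1.E_one c1.ore_const_eq A1_one by (auto simp: fun_eq_iff)

lemma sx_car: "F \<in> carrier (A2 q) \<Longrightarrow> sx q F \<in> carrier (A2 q)"
  unfolding A2_car sx_def bnd2_def by auto

lemma dx_car: "F \<in> carrier (A2 q) \<Longrightarrow> dx q hbar F \<in> carrier (A2 q)"
proof -
  assume "F \<in> carrier (A2 q)"
  then obtain n where n: "bnd2 n F" unfolding A2_car by blast
  have "bnd2 (Suc n) (dx q hbar F)" using n unfolding bnd2_def dx_def by auto
  then show ?thesis unfolding A2_car by blast
qed

lemma sx_hom: "q \<noteq> 0 \<Longrightarrow> sx q \<in> ring_hom (A2 q) (A2 q)"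
proof (rule ring_hom_memI)
  assume q: "q \<noteq> 0"
  fix x assume "x \<in> carrier (A2 q)" then show "sx q x \<in> carrier (A2 q)" by (rule sx_car)
next
  assume q: "q \<noteq> 0"
  fix x y assume x: "x \<in> carrier (A2 q)" and y: "y \<in> carrier (A2 q)"
  let ?Q = "complex_of_real q"
  have Q: "?Q \<noteq> 0" using q by simp
  show "sx q (x \<otimes>\<^bsub>A2 q\<^esub> y) = sx q x \<otimes>\<^bsub>A2 q\<^esub> sx q y"
    unfolding A2_mult[OF x y] A2_mult[OF sx_car[OF x] sx_car[OF y]]
  proof (intro ext)
    fix b a
    show "sx q (\<lambda>b a. \<Sum>i\<le>b. \<Sum>l\<le>a. x i l * ((1 / ?Q) ^ (i * (a - l)) * y (b - i) (a - l))) b a =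
       (\<Sum>i\<le>b. \<Sum>l\<le>a. sx q x i l * ((1 / ?Q) ^ (i * (a - l)) * sx q y (b - i) (a - l)))"
      unfolding sx_def sum_distrib_left
    proof (intro sum.cong refl)
      fix i l assume i: "i \<in> {..b}" and l: "l \<in> {..a}"
      have e1: "?Q ^ a = ?Q ^ l * ?Q ^ (a - l)" using l by (simp add: power_add[symmetric])
      have e2: "(1 / ?Q) ^ b = (1 / ?Q) ^ i * (1 / ?Q) ^ (b - i)" using i by (simp add: power_add[symmetric])
      show "?Q ^ a * (1 / ?Q) ^ b * (x i l * ((1 / ?Q) ^ (i * (a - l)) * y (b - i) (a - l))) =
          ?Q ^ l * (1 / ?Q) ^ i * x i l * ((1 / ?Q) ^ (i * (a - l)) * (?Q ^ (a - l) * (1 / ?Q) ^ (b - i) * y (b - i) (a - l)))"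
        unfolding e1 e2 by (simp add: algebra_simps)
    qed
  qed
next
  fix x y assume x: "x \<in> carrier (A2 q)" and y: "y \<in> carrier (A2 q)"
  show "sx q (x \<oplus>\<^bsub>A2 q\<^esub> y) = sx q x \<oplus>\<^bsub>A2 q\<^esub> sx q y"
    by (auto simp: sx_def fun_eq_iff algebra_simps)
next
  show "sx q \<one>\<^bsub>A2 q\<^esub> = \<one>\<^bsub>A2 q\<^esub>" unfolding A2_one sx_def by (auto simp: fun_eq_iff)
qed

lemma sx_iso: "q \<noteq> 0 \<Longrightarrow> sx q \<in> ring_iso (A2 q) (A2 q)"
proof -
  assume q: "q \<noteq> 0"
  let ?Q = "complex_of_real q"
  let ?g = "\<lambda>F b a. (1 / ?Q) ^ a * ?Q ^ b * F b a"
  have g: "F \<in> carrier (A2 q) \<Longrightarrow> ?g F \<in> carrier (A2 q)" for F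
    unfolding A2_car bnd2_def by auto
  have c: "?Q ^ n * (1 / ?Q) ^ n = 1" for n using q by (simp add: power_mult_distrib[symmetric])
  have c': "(1 / ?Q) ^ n * ?Q ^ n = 1" for n using q by (simp add: power_mult_distrib[symmetric])
  have "bij_betw (sx q) (carrier (A2 q)) (carrier (A2 q))"
  proof (rule bij_betw_byWitness[of _ ?g])
    show "\<forall>F\<in>carrier (A2 q). ?g (sx q F) = F"
    proof (intro ballI ext)
      fix F b a
      have "?g (sx q F) b a = ((1 / ?Q) ^ a * ?Q ^ a) * (?Q ^ b * (1 / ?Q) ^ b) * F b a"
        unfolding sx_def by (simp add: algebra_simps)
      then show "?g (sx q F) b a = F b a" unfolding c c' by simp
    qed
    show "\<forall>F\<in>carrier (A2 q). sx q (?g F) = F"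
    proof (intro ballI ext)
      fix F b a
      have "sx q (?g F) b a = (?Q ^ a * (1 / ?Q) ^ a) * ((1 / ?Q) ^ b * ?Q ^ b) * F b a"
        unfolding sx_def by (simp add: algebra_simps)
      then show "sx q (?g F) b a = F b a" unfolding c c' by simp
    qed
    show "sx q ` carrier (A2 q) \<subseteq> carrier (A2 q)" using sx_car by blast
    show "?g ` carrier (A2 q) \<subseteq> carrier (A2 q)" using g by blast
  qed
  then show ?thesis unfolding ring_iso_def using sx_hom[OF q] by blast
qed

lemma coef_id:
  fixes Q r k :: complex
  assumes Qr: "Q * r = 1" and qn_add': "qn q (i + m) = qn q i + r ^ (2 * i) * qn q m"
  shows "k * Q ^ (l + u) * qn q (i + m) * r ^ (i * u) =
     Q ^ l * r ^ i * r ^ (i * Suc u) * (k * Q ^ u * qn q m) + k * Q ^ l * qn q i * r ^ ((i - 1) * u)"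
proof -
  have A: "Q ^ l * r ^ i * r ^ (i * Suc u) * (k * Q ^ u * qn q m) = k * Q ^ (l + u) * r ^ (i * u) * (r ^ (2 * i) * qn q m)"
  proof -
    have "r ^ (2 * i) = r ^ i * r ^ i" by (simp add: mult_2 power_add)
    then show ?thesis by (simp add: power_add algebra_simps)
  qed
  have B: "k * Q ^ l * qn q i * r ^ ((i - 1) * u) = k * Q ^ (l + u) * r ^ (i * u) * qn q i"
  proof (cases i)
    case 0 then show ?thesis by simp
  next
    case (Suc i')
    have "Q ^ u * r ^ u = 1" using Qr by (simp add: power_mult_distrib[symmetric])
    then have "Q ^ (l + u) * r ^ (i * u) = Q ^ l * r ^ (i' * u) * (Q ^ u * r ^ u)"
      unfolding Suc by (simp add: power_add algebra_simps)
    then show ?thesis using \<open>Q ^ u * r ^ u = 1\<close> Suc by (simp add: algebra_simps)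
  qed
  show ?thesis unfolding A B qn_add' by (simp add: algebra_simps)
qed


lemma dx_mult:
  assumes q: "q \<noteq> 0" and F: "F \<in> carrier (A2 q)" and G: "G \<in> carrier (A2 q)"
  shows "dx q hbar (F \<otimes>\<^bsub>A2 q\<^esub> G) = sx q F \<otimes>\<^bsub>A2 q\<^esub> dx q hbar G + dx q hbar F \<otimes>\<^bsub>A2 q\<^esub> G"
proof (intro ext)
  fix b a
  let ?Q = "complex_of_real q"
  let ?r = "1 / complex_of_real q"
  let ?k = "kap q hbar"
  have Qr: "?Q * ?r = 1" using q by simp
  note M1 = A2_mult[OF F G] and M2 = A2_mult[OF sx_car[OF F] dx_car[OF G]]
    and M3 = A2_mult[OF dx_car[OF F] G]
  show "dx q hbar (F \<otimes>\<^bsub>A2 q\<^esub> G) b a = (sx q F \<otimes>\<^bsub>A2 q\<^esub> dx q hbar G + dx q hbar F \<otimes>\<^bsub>A2 q\<^esub> G) b a"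
  proof (cases a)
    case 0
    then show ?thesis unfolding M2 M3 by (simp add: dx_def)
  next
    case (Suc a')
    define S where "S c = (\<Sum>i\<le>Suc b. \<Sum>l\<le>a'. F i l * G (Suc b - i) (a' - l) * c i l)" for c :: "nat \<Rightarrow> nat \<Rightarrow> complex"
    have L1: "dx q hbar (F \<otimes>\<^bsub>A2 q\<^esub> G) b a = S (\<lambda>i l. ?k * ?Q ^ a' * qn q (Suc b) * ?r ^ (i * (a' - l)))"
      unfolding S_def M1 Suc dx_def by (simp add: sum_distrib_left algebra_simps)
    have L2: "(sx q F \<otimes>\<^bsub>A2 q\<^esub> dx q hbar G) b a
        = S (\<lambda>i l. ?Q ^ l * ?r ^ i * ?r ^ (i * Suc (a' - l)) * (?k * ?Q ^ (a' - l) * qn q (Suc b - i)))"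
    proof -
      have "(sx q F \<otimes>\<^bsub>A2 q\<^esub> dx q hbar G) b a = (\<Sum>i\<le>b. \<Sum>l\<le>Suc a'. sx q F i l * (?r ^ (i * (Suc a' - l)) * dx q hbar G (b - i) (Suc a' - l)))"
        unfolding M2 Suc ..
      also have "\<dots> = (\<Sum>i\<le>b. \<Sum>l\<le>a'. F i l * G (Suc b - i) (a' - l) *
           (?Q ^ l * ?r ^ i * ?r ^ (i * Suc (a' - l)) * (?k * ?Q ^ (a' - l) * qn q (Suc b - i))))"
      proof (rule sum.cong[OF refl])
        fix i assume i: "i \<in> {..b}"
        have "(\<Sum>l\<le>Suc a'. sx q F i l * (?r ^ (i * (Suc a' - l)) * dx q hbar G (b - i) (Suc a' - l)))
            = (\<Sum>l\<le>a'. sx q F i l * (?r ^ (i * (Suc a' - l)) * dx q hbar G (b - i) (Suc a' - l)))"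
          by (simp add: dx_def)
        also have "\<dots> = (\<Sum>l\<le>a'. F i l * G (Suc b - i) (a' - l) *
           (?Q ^ l * ?r ^ i * ?r ^ (i * Suc (a' - l)) * (?k * ?Q ^ (a' - l) * qn q (Suc b - i))))"
        proof (rule sum.cong[OF refl])
          fix l assume l: "l \<in> {..a'}"
          have e1: "Suc a' - l = Suc (a' - l)" using l by (simp add: Suc_diff_le)
          have e2: "b - i + 1 = Suc b - i" using i by (simp add: Suc_diff_le)
          show "sx q F i l * (?r ^ (i * (Suc a' - l)) * dx q hbar G (b - i) (Suc a' - l)) =
              F i l * G (Suc b - i) (a' - l) * (?Q ^ l * ?r ^ i * ?r ^ (i * Suc (a' - l)) * (?k * ?Q ^ (a' - l) * qn q (Suc b - i)))"
            unfolding e1 dx_def sx_def using e2 by (simp add: algebra_simps)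
        qed
        finally show "(\<Sum>l\<le>Suc a'. sx q F i l * (?r ^ (i * (Suc a' - l)) * dx q hbar G (b - i) (Suc a' - l))) =
            (\<Sum>l\<le>a'. F i l * G (Suc b - i) (a' - l) * (?Q ^ l * ?r ^ i * ?r ^ (i * Suc (a' - l)) * (?k * ?Q ^ (a' - l) * qn q (Suc b - i))))" .
      qed
      also have "\<dots> = S (\<lambda>i l. ?Q ^ l * ?r ^ i * ?r ^ (i * Suc (a' - l)) * (?k * ?Q ^ (a' - l) * qn q (Suc b - i)))"
        unfolding S_def by simp
      finally show ?thesis .
    qed
    have L3: "(dx q hbar F \<otimes>\<^bsub>A2 q\<^esub> G) b a = S (\<lambda>i l. ?k * ?Q ^ l * qn q i * ?r ^ ((i - 1) * (a' - l)))"
    proof -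
      have "(dx q hbar F \<otimes>\<^bsub>A2 q\<^esub> G) b a = (\<Sum>i\<le>b. \<Sum>l\<le>Suc a'. dx q hbar F i l * (?r ^ (i * (Suc a' - l)) * G (b - i) (Suc a' - l)))"
        unfolding M3 Suc ..
      also have "\<dots> = (\<Sum>i\<le>b. \<Sum>l\<le>a'. F (Suc i) l * G (Suc b - Suc i) (a' - l) * (?k * ?Q ^ l * qn q (Suc i) * ?r ^ ((Suc i - 1) * (a' - l))))"
      proof (rule sum.cong[OF refl])
        fix i
        show "(\<Sum>l\<le>Suc a'. dx q hbar F i l * (?r ^ (i * (Suc a' - l)) * G (b - i) (Suc a' - l))) =
          (\<Sum>l\<le>a'. F (Suc i) l * G (Suc b - Suc i) (a' - l) * (?k * ?Q ^ l * qn q (Suc i) * ?r ^ ((Suc i - 1) * (a' - l))))"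
          unfolding sum.atMost_Suc_shift by (simp add: dx_def algebra_simps)
      qed
      also have "\<dots> = S (\<lambda>i l. ?k * ?Q ^ l * qn q i * ?r ^ ((i - 1) * (a' - l)))"
        unfolding S_def sum.atMost_Suc_shift[of _ b] by simp
      finally show ?thesis .
    qed
    have L4: "S (\<lambda>i l. ?k * ?Q ^ a' * qn q (Suc b) * ?r ^ (i * (a' - l))) =
       S (\<lambda>i l. ?Q ^ l * ?r ^ i * ?r ^ (i * Suc (a' - l)) * (?k * ?Q ^ (a' - l) * qn q (Suc b - i)))
       + S (\<lambda>i l. ?k * ?Q ^ l * qn q i * ?r ^ ((i - 1) * (a' - l)))"
      unfolding S_def sum.distrib[symmetric]
    proof (intro sum.cong refl)
      fix i l assume i: "i \<in> {..Suc b}" and l: "l \<in> {..a'}"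
      have e1: "a' = l + (a' - l)" using l by simp
      have e2: "Suc b = i + (Suc b - i)" using i by simp
      have "?k * ?Q ^ a' * qn q (Suc b) * ?r ^ (i * (a' - l)) =
         ?Q ^ l * ?r ^ i * ?r ^ (i * Suc (a' - l)) * (?k * ?Q ^ (a' - l) * qn q (Suc b - i)) +
         ?k * ?Q ^ l * qn q i * ?r ^ ((i - 1) * (a' - l))"
        using coef_id[OF Qr qn_add, where k="kap q hbar" and l=l and u="a' - l" and i=i and m="Suc b - i"] e1 e2 by simp
      then show "F i l * G (Suc b - i) (a' - l) * (?k * ?Q ^ a' * qn q (Suc b) * ?r ^ (i * (a' - l))) =
         F i l * G (Suc b - i) (a' - l) * (?Q ^ l * ?r ^ i * ?r ^ (i * Suc (a' - l)) * (?k * ?Q ^ (a' - l) * qn q (Suc b - i)))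
       + F i l * G (Suc b - i) (a' - l) * (?k * ?Q ^ l * qn q i * ?r ^ ((i - 1) * (a' - l)))"
        by (simp add: algebra_simps)
    qed
    show ?thesis unfolding plus_fun_def L1 L2 L3 L4 ..
  qed
qed


lemma dx_der: "q \<noteq> 0 \<Longrightarrow> sigma_derivation (A2 q) (sx q) (dx q hbar)"
  unfolding sigma_derivation_def
proof (intro conjI ballI)
  show "dx q hbar \<in> carrier (A2 q) \<rightarrow> carrier (A2 q)" using dx_car by blast
next
  fix a b assume q: "q \<noteq> 0" and a: "a \<in> carrier (A2 q)" and b: "b \<in> carrier (A2 q)"
  show "dx q hbar (a \<oplus>\<^bsub>A2 q\<^esub> b) = dx q hbar a \<oplus>\<^bsub>A2 q\<^esub> dx q hbar b"
    by (auto simp: dx_def fun_eq_iff algebra_simps)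
  show "dx q hbar (a \<otimes>\<^bsub>A2 q\<^esub> b) = sx q a \<otimes>\<^bsub>A2 q\<^esub> dx q hbar b \<oplus>\<^bsub>A2 q\<^esub> dx q hbar a \<otimes>\<^bsub>A2 q\<^esub> b"
    using dx_mult[OF q a b] by simp
qed

lemma oreA_A2: "q \<noteq> 0 \<Longrightarrow> oreA (A2 q) (sx q) (dx q hbar)"
  unfolding oreA_def oreA_axioms_def
  using c1.E_ring sx_hom dx_der by auto

locale qnz =
  fixes q hbar :: real
  assumes qnz: "q \<noteq> 0"

sublocale qnz \<subseteq> c2: oreA "A2 q" "sx q" "dx q hbar"
  by (rule oreA_A2[OF qnz])

abbreviation "RR q hbar \<equiv> ore_ext (A2 q) (sx q) (dx q hbar)"

definition fmul :: "(hgen list \<Rightarrow> complex) \<Rightarrow> (hgen list \<Rightarrow> complex) \<Rightarrow> hgen list \<Rightarrow> complex" where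
  "fmul f g = (\<lambda>w. \<Sum>i\<le>length w. f (take i w) * g (drop i w))"

definition fw :: "hgen list \<Rightarrow> hgen list \<Rightarrow> complex" where
  "fw u = (\<lambda>v. if v = u then 1 else 0)"

lemma FA_car: "carrier free_alg = {f. finite {w. f w \<noteq> 0}}"
  and FA_add[simp]: "add free_alg = (+)" and FA_zero[simp]: "zero free_alg = 0"
  and FA_one: "one free_alg = fw []" and FA_mult: "mult free_alg = fmul"
  unfolding free_alg_def fw_def fmul_def by (auto simp: fun_eq_iff)

lemma tri_reindex:
  fixes F :: "nat \<Rightarrow> nat \<Rightarrow> 'a::comm_monoid_add"
  shows "(\<Sum>i\<le>n. \<Sum>j\<le>i. F i j) = (\<Sum>j\<le>n. \<Sum>k\<le>n - j. F (j + k) j)"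
proof (induct n)
  case (Suc n)
  have "(\<Sum>j\<le>Suc n. \<Sum>k\<le>Suc n - j. F (j + k) j) = (\<Sum>j\<le>n. \<Sum>k\<le>Suc n - j. F (j + k) j) + F (Suc n) (Suc n)"
    by simp
  also have "(\<Sum>j\<le>n. \<Sum>k\<le>Suc n - j. F (j + k) j) = (\<Sum>j\<le>n. (\<Sum>k\<le>n - j. F (j + k) j) + F (Suc n) j)"
  proof (rule sum.cong[OF refl])
    fix j assume "j \<in> {..n}"
    then have e: "Suc n - j = Suc (n - j)" and e2: "j + Suc (n - j) = Suc n" by auto
    show "(\<Sum>k\<le>Suc n - j. F (j + k) j) = (\<Sum>k\<le>n - j. F (j + k) j) + F (Suc n) j"
      unfolding e sum.atMost_Suc e2 ..
  qed
  also have "(\<Sum>j\<le>n. (\<Sum>k\<le>n - j. F (j + k) j) + F (Suc n) j) =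
     (\<Sum>j\<le>n. \<Sum>k\<le>n - j. F (j + k) j) + (\<Sum>j\<le>n. F (Suc n) j)"
    by (rule sum.distrib)
  also have "(\<Sum>j\<le>n. \<Sum>k\<le>n - j. F (j + k) j) = (\<Sum>i\<le>n. \<Sum>j\<le>i. F i j)"
    by (rule Suc[symmetric])
  finally have R: "(\<Sum>j\<le>Suc n. \<Sum>k\<le>Suc n - j. F (j + k) j) =
     (\<Sum>i\<le>n. \<Sum>j\<le>i. F i j) + (\<Sum>j\<le>n. F (Suc n) j) + F (Suc n) (Suc n)" .
  have L: "(\<Sum>i\<le>Suc n. \<Sum>j\<le>i. F i j) = (\<Sum>i\<le>n. \<Sum>j\<le>i. F i j) + ((\<Sum>j\<le>n. F (Suc n) j) + F (Suc n) (Suc n))"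
    by (simp only: sum.atMost_Suc)
  show ?case unfolding L R by (simp only: add.assoc)
qed simp

lemma fmul_supp: "{w. fmul f g w \<noteq> 0} \<subseteq> (\<lambda>(u, v). u @ v) ` ({w. f w \<noteq> 0} \<times> {w. g w \<noteq> 0})"
proof
  fix w assume "w \<in> {w. fmul f g w \<noteq> 0}"
  then have "(\<Sum>i\<le>length w. f (take i w) * g (drop i w)) \<noteq> 0" unfolding fmul_def by simp
  then obtain i where "f (take i w) * g (drop i w) \<noteq> 0"
    using sum.not_neutral_contains_not_neutral by blast
  then show "w \<in> (\<lambda>(u, v). u @ v) ` ({w. f w \<noteq> 0} \<times> {w. g w \<noteq> 0})"
    by (intro image_eqI[of _ _ "(take i w, drop i w)"]) auto
qed

lemma fmul_assoc: "fmul (fmul f g) h = fmul f (fmul g h)"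
proof
  fix w :: "hgen list"
  let ?n = "length w"
  have "fmul (fmul f g) h w = (\<Sum>i\<le>?n. \<Sum>j\<le>i. f (take j w) * g (take (i - j) (drop j w)) * h (drop i w))"
    unfolding fmul_def
    by (rule sum.cong[OF refl]) (auto simp: sum_distrib_right min_def take_take drop_take intro!: sum.cong)
  also have "\<dots> = (\<Sum>j\<le>?n. \<Sum>k\<le>?n - j. f (take j w) * g (take (j + k - j) (drop j w)) * h (drop (j + k) w))"
    by (rule tri_reindex)
  also have "\<dots> = fmul f (fmul g h) w"
    unfolding fmul_def
    by (rule sum.cong[OF refl]) (auto simp: sum_distrib_left drop_drop add.commute mult.assoc intro!: sum.cong)
  finally show "fmul (fmul f g) h w = fmul f (fmul g h) w" .
qed

lemma fw_car: "fw u \<in> carrier free_alg"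
  unfolding FA_car fw_def by auto

lemma fmul_one_l: "fmul (fw []) g = g"
proof
  fix w
  have "fmul (fw []) g w = (\<Sum>i\<le>length w. if i = 0 then g w else 0)"
    unfolding fmul_def fw_def by (rule sum.cong) auto
  then show "fmul (fw []) g w = g w" by simp
qed

lemma fmul_one_r: "fmul f (fw []) = f"
proof
  fix w
  have "fmul f (fw []) w = (\<Sum>i\<le>length w. if i = length w then f w else 0)"
    unfolding fmul_def fw_def by (rule sum.cong) auto
  then show "fmul f (fw []) w = f w" by simp
qed

lemma fmul_car: "f \<in> carrier free_alg \<Longrightarrow> g \<in> carrier free_alg \<Longrightarrow> fmul f g \<in> carrier free_alg"
  unfolding FA_car using fmul_supp[of f g] by (auto intro: finite_subset)

lemma ring_FA: "ring free_alg"
proof (rule ringI)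
  show "abelian_group free_alg"
  proof (rule abelian_groupI)
    fix x y assume "x \<in> carrier free_alg" "y \<in> carrier free_alg"
    then show "x \<oplus>\<^bsub>free_alg\<^esub> y \<in> carrier free_alg"
      unfolding FA_car FA_add
      by (auto intro: finite_subset[of _ "{w. x w \<noteq> 0} \<union> {w. y w \<noteq> 0}"])
    show "x \<oplus>\<^bsub>free_alg\<^esub> y = y \<oplus>\<^bsub>free_alg\<^esub> x" by (simp add: add.commute)
  next
    show "\<zero>\<^bsub>free_alg\<^esub> \<in> carrier free_alg" unfolding FA_car by simp
  next
    fix x y z show "x \<oplus>\<^bsub>free_alg\<^esub> y \<oplus>\<^bsub>free_alg\<^esub> z = x \<oplus>\<^bsub>free_alg\<^esub> (y \<oplus>\<^bsub>free_alg\<^esub> z)"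
      by (simp add: add.assoc)
  next
    fix x show "\<zero>\<^bsub>free_alg\<^esub> \<oplus>\<^bsub>free_alg\<^esub> x = x" by simp
  next
    fix x assume x: "x \<in> carrier free_alg"
    then have "- x \<in> carrier free_alg" unfolding FA_car by simp
    then show "\<exists>y\<in>carrier free_alg. y \<oplus>\<^bsub>free_alg\<^esub> x = \<zero>\<^bsub>free_alg\<^esub>"
      by (intro bexI[of _ "- x"]) auto
  qed
next
  show "monoid free_alg"
    by (rule monoidI) (auto simp: FA_mult FA_one fmul_car fw_car fmul_assoc fmul_one_l fmul_one_r)
next
  fix x y z
  show "(x \<oplus>\<^bsub>free_alg\<^esub> y) \<otimes>\<^bsub>free_alg\<^esub> z = x \<otimes>\<^bsub>free_alg\<^esub> z \<oplus>\<^bsub>free_alg\<^esub> y \<otimes>\<^bsub>free_alg\<^esub> z"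
    by (auto simp: FA_mult fmul_def fun_eq_iff sum.distrib algebra_simps)
  show "z \<otimes>\<^bsub>free_alg\<^esub> (x \<oplus>\<^bsub>free_alg\<^esub> y) = z \<otimes>\<^bsub>free_alg\<^esub> x \<oplus>\<^bsub>free_alg\<^esub> z \<otimes>\<^bsub>free_alg\<^esub> y"
    by (auto simp: FA_mult fmul_def fun_eq_iff sum.distrib algebra_simps)
qed


lemma fw_mult: "fmul (fw u) (fw v) = fw (u @ v)"
proof
  fix w :: "hgen list"
  have "fmul (fw u) (fw v) w = (\<Sum>i\<le>length w. if i = length u \<and> w = u @ v then 1 else 0)"
    unfolding fmul_def fw_def
  proof (rule sum.cong[OF refl])
    fix i assume i: "i \<in> {..length w}"
    have "(take i w = u \<and> drop i w = v) \<longleftrightarrow> (i = length u \<and> w = u @ v)"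
    proof
      assume h: "take i w = u \<and> drop i w = v"
      then have "length u = i" using i by auto
      moreover have "w = u @ v" using h by (metis append_take_drop_id)
      ultimately show "i = length u \<and> w = u @ v" by simp
    qed auto
    then show "(if take i w = u then 1 else 0) * (if drop i w = v then 1 else 0) =
      (if i = length u \<and> w = u @ v then 1 else (0::complex))" by auto
  qed
  also have "\<dots> = fw (u @ v) w" unfolding fw_def by auto
  finally show "fmul (fw u) (fw v) w = fw (u @ v) w" .
qed

definition sm :: "complex \<Rightarrow> (hgen list \<Rightarrow> complex) \<Rightarrow> hgen list \<Rightarrow> complex" where
  "sm c f = (\<lambda>w. c * f w)"

lemma fmul_sm_l: "fmul (sm c f) g = sm c (fmul f g)"
  unfolding fmul_def sm_def by (auto simp: fun_eq_iff sum_distrib_left mult.assoc)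
lemma fmul_sm_r: "fmul f (sm c g) = sm c (fmul f g)"
  unfolding fmul_def sm_def by (auto simp: fun_eq_iff sum_distrib_left algebra_simps)
lemma fmul_add_l: "fmul (f + h) g = fmul f g + fmul h g"
  unfolding fmul_def by (auto simp: fun_eq_iff sum.distrib algebra_simps)
lemma fmul_add_r: "fmul f (g + h) = fmul f g + fmul f h"
  unfolding fmul_def by (auto simp: fun_eq_iff sum.distrib algebra_simps)
lemma fmul_0_l[simp]: "fmul 0 g = 0"
  unfolding fmul_def by (auto simp: fun_eq_iff)
lemma fmul_0_r[simp]: "fmul f 0 = 0"
  unfolding fmul_def by (auto simp: fun_eq_iff)
lemma fmul_diff_l: "fmul (f - h) g = fmul f g - fmul h g"
  unfolding fmul_def by (auto simp: fun_eq_iff sum_subtractf algebra_simps)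
lemma fmul_diff_r: "fmul f (g - h) = fmul f g - fmul f h"
  unfolding fmul_def by (auto simp: fun_eq_iff sum_subtractf algebra_simps)
lemma fmul_sum_l: "fmul (sum F S) g = (\<Sum>x\<in>S. fmul (F x) g)"
proof (induct S rule: infinite_finite_induct)
  case (insert x F) show ?case by (simp only: sum.insert[OF insert(1,2)] fmul_add_l insert(3))
qed (simp_all only: sum.infinite sum.empty fmul_0_l not_False_eq_True)
lemma fmul_sum_r: "fmul g (sum F S) = (\<Sum>x\<in>S. fmul g (F x))"
proof (induct S rule: infinite_finite_induct)
  case (insert x F) show ?case by (simp only: sum.insert[OF insert(1,2)] fmul_add_r insert(3))
qed (simp_all only: sum.infinite sum.empty fmul_0_r not_False_eq_True)

lemma sm_sum: "sm c (sum F S) = (\<Sum>x\<in>S. sm c (F x))"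
  unfolding sm_def by (induct S rule: infinite_finite_induct) (auto simp: fun_eq_iff algebra_simps)
lemma sm_add: "sm c (f + g) = sm c f + sm c g"
  unfolding sm_def by (auto simp: fun_eq_iff algebra_simps)
lemma sm_diff: "sm c (f - g) = sm c f - sm c g"
  unfolding sm_def by (auto simp: fun_eq_iff algebra_simps)
lemma sm_sm: "sm c (sm d f) = sm (c * d) f"
  unfolding sm_def by (auto simp: fun_eq_iff)
lemma sm_1[simp]: "sm 1 f = f"
  unfolding sm_def by auto
lemma sm_0[simp]: "sm 0 f = 0"
  unfolding sm_def by (auto simp: fun_eq_iff)
lemma sm_zero[simp]: "sm c 0 = 0"
  unfolding sm_def by (auto simp: fun_eq_iff)

lemma fa_scalar_eq: "fa_scalar c = sm c (fw [])"
  unfolding fa_scalar_def sm_def fw_def by auto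

lemma fmul_scalar_l: "fmul (fa_scalar c) f = sm c f"
  unfolding fa_scalar_eq fmul_sm_l fmul_one_l ..
lemma fmul_scalar_r: "fmul f (fa_scalar c) = sm c f"
  unfolding fa_scalar_eq fmul_sm_r fmul_one_r ..

lemma fa_gen_eq: "fa_gen g = fw [g]"
  unfolding fa_gen_def fw_def by auto

lemma sm_car: "f \<in> carrier free_alg \<Longrightarrow> sm c f \<in> carrier free_alg"
  unfolding FA_car sm_def by (auto intro: finite_subset[of _ "{w. f w \<noteq> 0}"])

lemma FA_decomp: "f \<in> carrier free_alg \<Longrightarrow> f = (\<Sum>w\<in>{w. f w \<noteq> 0}. sm (f w) (fw w))"
proof
  fix v assume f: "f \<in> carrier free_alg"
  have fin: "finite {w. f w \<noteq> 0}" using f unfolding FA_car by simp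
  have "(\<Sum>w\<in>{w. f w \<noteq> 0}. sm (f w) (fw w)) v = (\<Sum>w\<in>{w. f w \<noteq> 0}. if w = v then f v else 0)"
    unfolding sum_fun_apply sm_def fw_def by (rule sum.cong) auto
  also have "\<dots> = f v" using fin by auto
  finally show "f v = (\<Sum>w\<in>{w. f w \<noteq> 0}. sm (f w) (fw w)) v" ..
qed

definition bnd3 :: "nat \<Rightarrow> (nat \<Rightarrow> nat \<Rightarrow> nat \<Rightarrow> complex) \<Rightarrow> bool" where
  "bnd3 n F \<longleftrightarrow> (\<forall>c b a. n < c \<or> n < b \<or> n < a \<longrightarrow> F c b a = 0)"

definition monoR :: "nat \<Rightarrow> nat \<Rightarrow> nat \<Rightarrow> nat \<Rightarrow> nat \<Rightarrow> nat \<Rightarrow> complex" where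
  "monoR a b c = (\<lambda>c' b' a'. if c' = c \<and> b' = b \<and> a' = a then 1 else 0)"

definition smR :: "complex \<Rightarrow> (nat \<Rightarrow> nat \<Rightarrow> nat \<Rightarrow> complex) \<Rightarrow> nat \<Rightarrow> nat \<Rightarrow> nat \<Rightarrow> complex" where
  "smR k F = (\<lambda>c b a. k * F c b a)"

abbreviation "L1 \<equiv> ore_var C_ring"
abbreviation "L2 \<equiv> ore_const A1 L1"
abbreviation "P2 \<equiv> ore_var A1"
abbreviation "cc2 k \<equiv> ore_const A1 (ore_const C_ring k)"

lemma cC: "k \<in> carrier C_ring" by simp

lemma L1_eq: "L1 = (\<lambda>a. if a = 1 then 1 else 0)"
  unfolding c0.ore_var_eq C_ring_simps ..
lemma L2_eq: "L2 = (\<lambda>b a. if b = 0 \<and> a = 1 then 1 else 0)"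
  unfolding c1.ore_const_eq L1_eq by (auto simp: fun_eq_iff)
lemma P2_eq: "P2 = (\<lambda>b a. if b = 1 \<and> a = 0 then 1 else 0)"
  unfolding c1.ore_var_eq A1_one by (auto simp: fun_eq_iff)
lemma cc2_eq: "cc2 k = (\<lambda>b a. if b = 0 \<and> a = 0 then k else 0)"
  unfolding c1.ore_const_eq c0.ore_const_eq by (auto simp: fun_eq_iff)

lemma L1_car: "L1 \<in> carrier A1" by (rule c0.var_E)
lemma L2_car: "L2 \<in> carrier (A2 q)" by (rule c1.const_E[OF L1_car])
lemma P2_car: "P2 \<in> carrier (A2 q)" by (rule c1.var_E)
lemma cc2_car: "cc2 k \<in> carrier (A2 q)" by (rule c1.const_E[OF c0.const_E]) simp

lemma L1_mult: "h \<in> carrier A1 \<Longrightarrow> L1 \<otimes>\<^bsub>A1\<^esub> h = (\<lambda>a. if a = 0 then 0 else h (a - 1))"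
  unfolding c0.var_mult by (auto simp: c0.T_apply fun_eq_iff)

lemma L2_mult: "G \<in> carrier (A2 q) \<Longrightarrow> L2 \<otimes>\<^bsub>A2 q\<^esub> G = (\<lambda>b a. if a = 0 then 0 else G b (a - 1))"
  unfolding c1.const_mult[OF L1_car] using c1.E_memD[of G] L1_mult by (auto simp: fun_eq_iff)

lemma P2_mult: "G \<in> carrier (A2 q) \<Longrightarrow> P2 \<otimes>\<^bsub>A2 q\<^esub> G = (\<lambda>b a. if b = 0 then 0 else (1 / complex_of_real q) ^ a * G (b - 1) a)"
  unfolding c1.var_mult by (auto simp: c1.T_apply fun_eq_iff sp_def)

lemma cc2_mult: "G \<in> carrier (A2 q) \<Longrightarrow> cc2 k \<otimes>\<^bsub>A2 q\<^esub> G = (\<lambda>b a. k * G b a)"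
  unfolding c1.const_mult[OF c0.const_E[OF cC]]
  using c1.E_memD[of G] c0.const_mult[OF cC] by (auto simp: fun_eq_iff)

lemma cc2_central: "G \<in> carrier (A2 q) \<Longrightarrow> G \<otimes>\<^bsub>A2 q\<^esub> cc2 k = cc2 k \<otimes>\<^bsub>A2 q\<^esub> G"
proof (rule c1.mult_const_central[OF c0.const_E[OF cC]])
  show "sp q (ore_const C_ring k) = ore_const C_ring k"
    unfolding sp_def c0.ore_const_eq by (auto simp: fun_eq_iff)
  fix a assume a: "a \<in> carrier A1"
  show "a \<otimes>\<^bsub>A1\<^esub> ore_const C_ring k = ore_const C_ring k \<otimes>\<^bsub>A1\<^esub> a"
    by (rule c0.mult_const_central[OF cC _ _ _ a]) auto
qed auto

lemma oreA_triv: "ring S \<Longrightarrow> add S = (+) \<Longrightarrow> zero S = (0::'a::ab_group_add) \<Longrightarrow> oreA S id (\<lambda>_. 0)"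
proof -
  assume S: "ring S" and a: "add S = (+)" and z: "zero S = 0"
  interpret S: ring S by (rule S)
  have z1: "0 \<in> carrier S" using S.zero_closed z by simp
  have z2: "x \<in> carrier S \<Longrightarrow> x \<otimes>\<^bsub>S\<^esub> 0 = 0" for x using S.r_null[of x] z by simp
  have z3: "x \<in> carrier S \<Longrightarrow> 0 \<otimes>\<^bsub>S\<^esub> x = 0" for x using S.l_null[of x] z by simp
  show ?thesis unfolding oreA_def oreA_axioms_def sigma_derivation_def ring_hom_def
    using S a z z1 z2 z3 by auto
qed

interpretation fa: oreA free_alg id "\<lambda>_. 0"
  by (rule oreA_triv[OF ring_FA FA_add FA_zero])

context qnz
begin

abbreviation "R \<equiv> RR q hbar"
abbreviation "gL \<equiv> ore_const (A2 q) L2"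
abbreviation "gP \<equiv> ore_const (A2 q) P2"
abbreviation "gX \<equiv> ore_var (A2 q)"
abbreviation "scR k \<equiv> ore_const (A2 q) (cc2 k)"

lemma R_add[simp]: "add R = (+)" by (rule c2.E_add)
lemma R_zero[simp]: "zero R = 0" by (rule c2.E_zero)

lemma R_car: "carrier R = {F. \<exists>n. bnd3 n F}"
proof (rule equalityI; rule subsetI)
  fix F assume "F \<in> carrier R"
  then have F: "\<And>c. \<exists>n. bnd2 n (F c)" and "\<exists>N. bnd N F"
    unfolding c2.E_car A2_car by auto
  then obtain N where N: "bnd N F" by blast
  obtain nb where nb: "\<And>c. bnd2 (nb c) (F c)" using F by metis
  define n where "n = max N (Max (nb ` {..N}))"
  have "bnd3 n F" unfolding bnd3_def
  proof (intro allI impI)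
    fix c b a assume h: "n < c \<or> n < b \<or> n < a"
    show "F c b a = 0"
    proof (cases "c \<le> N")
      case True
      then have "nb c \<le> Max (nb ` {..N})" by (intro Max_ge) auto
      then have "nb c < b \<or> nb c < a" using h True unfolding n_def by auto
      then show ?thesis using nb[of c] unfolding bnd2_def by auto
    next
      case False then show ?thesis using N unfolding bnd_def by auto
    qed
  qed
  then show "F \<in> {F. \<exists>n. bnd3 n F}" by blast
next
  fix F assume "F \<in> {F. \<exists>n. bnd3 n F}"
  then obtain n where n: "bnd3 n F" by blast
  have "bnd2 n (F c)" for c using n unfolding bnd3_def bnd2_def by auto
  moreover have "bnd n F" using n unfolding bnd3_def bnd_def by (auto simp: fun_eq_iff)
  ultimately show "F \<in> carrier R" unfolding c2.E_car A2_car by auto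
qed

lemma R_one: "one R = monoR 0 0 0"
  unfolding c2.E_one c1.E_one c1.ore_const_eq c2.ore_const_eq A1_one monoR_def by (auto simp: fun_eq_iff)

lemma gX_eq: "gX = monoR 0 0 1"
  unfolding c2.ore_var_eq A2_one monoR_def by (auto simp: fun_eq_iff)
lemma gP_eq: "gP = monoR 0 1 0"
  unfolding c2.ore_const_eq P2_eq monoR_def by (auto simp: fun_eq_iff)
lemma gL_eq: "gL = monoR 1 0 0"
  unfolding c2.ore_const_eq L2_eq monoR_def by (auto simp: fun_eq_iff)
lemma scR_eq: "scR k = smR k (monoR 0 0 0)"
  unfolding c2.ore_const_eq cc2_eq monoR_def smR_def by (auto simp: fun_eq_iff)

lemma gL_mult: "F \<in> carrier R \<Longrightarrow> gL \<otimes>\<^bsub>R\<^esub> F = (\<lambda>c b a. if a = 0 then 0 else F c b (a - 1))"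
  unfolding c2.const_mult[OF L2_car] using c2.E_memD[of F] L2_mult by (auto simp: fun_eq_iff)

lemma gP_mult: "F \<in> carrier R \<Longrightarrow> gP \<otimes>\<^bsub>R\<^esub> F = (\<lambda>c b a. if b = 0 then 0 else (1 / complex_of_real q) ^ a * F c (b - 1) a)"
  unfolding c2.const_mult[OF P2_car] using c2.E_memD[of F] P2_mult by (auto simp: fun_eq_iff)

lemma gX_mult: "F \<in> carrier R \<Longrightarrow> gX \<otimes>\<^bsub>R\<^esub> F = (\<lambda>c b a.
    (if c = 0 then 0 else complex_of_real q ^ a * (1 / complex_of_real q) ^ b * F (c - 1) b a)
    + (if a = 0 then 0 else kap q hbar * complex_of_real q ^ (a - 1) * qn q (b + 1) * F c (b + 1) (a - 1)))"
  unfolding c2.var_mult by (auto simp: c2.T_apply fun_eq_iff sx_def dx_def)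

lemma scR_mult: "F \<in> carrier R \<Longrightarrow> scR k \<otimes>\<^bsub>R\<^esub> F = smR k F"
  unfolding c2.const_mult[OF cc2_car] smR_def using c2.E_memD[of F] cc2_mult by (auto simp: fun_eq_iff)

lemma scR_central: "F \<in> carrier R \<Longrightarrow> F \<otimes>\<^bsub>R\<^esub> scR k = scR k \<otimes>\<^bsub>R\<^esub> F"
proof (rule c2.mult_const_central[OF cc2_car])
  show "sx q (cc2 k) = cc2 k" unfolding cc2_eq sx_def by (auto simp: fun_eq_iff)
  show "dx q hbar (cc2 k) = 0" unfolding cc2_eq dx_def by (auto simp: fun_eq_iff)
  fix a assume "a \<in> carrier (A2 q)" then show "a \<otimes>\<^bsub>A2 q\<^esub> cc2 k = cc2 k \<otimes>\<^bsub>A2 q\<^esub> a" by (rule cc2_central)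
qed


sublocale rr: oreA R id "\<lambda>_. 0"
  by (rule oreA_triv[OF c2.E_ring R_add R_zero])

lemma smR_eq: "F \<in> carrier R \<Longrightarrow> smR k F = scR k \<otimes>\<^bsub>R\<^esub> F"
  using scR_mult by simp

lemma scR_car: "scR k \<in> carrier R" by (rule c2.const_E[OF cc2_car])

lemma smR_car: "F \<in> carrier R \<Longrightarrow> smR k F \<in> carrier R"
  unfolding smR_eq by (rule rr.m_closed[OF scR_car])

lemma smR_mult_l: "F \<in> carrier R \<Longrightarrow> G \<in> carrier R \<Longrightarrow> smR k F \<otimes>\<^bsub>R\<^esub> G = smR k (F \<otimes>\<^bsub>R\<^esub> G)"
  by (simp add: smR_eq rr.m_closed scR_car rr.m_assoc)

lemma smR_mult_r: "F \<in> carrier R \<Longrightarrow> G \<in> carrier R \<Longrightarrow> F \<otimes>\<^bsub>R\<^esub> smR k G = smR k (F \<otimes>\<^bsub>R\<^esub> G)"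
proof -
  assume F: "F \<in> carrier R" and G: "G \<in> carrier R"
  have "F \<otimes>\<^bsub>R\<^esub> smR k G = (F \<otimes>\<^bsub>R\<^esub> scR k) \<otimes>\<^bsub>R\<^esub> G"
    unfolding smR_eq[OF G] using F G scR_car by (simp add: rr.m_assoc)
  also have "\<dots> = smR k (F \<otimes>\<^bsub>R\<^esub> G)"
    unfolding scR_central[OF F] using F G scR_car by (simp add: rr.m_assoc smR_eq rr.m_closed)
  finally show ?thesis .
qed

lemma smR_add: "smR k (F + G) = smR k F + smR k G"
  unfolding smR_def by (auto simp: fun_eq_iff algebra_simps)
lemma smR_diff: "smR k (F - G) = smR k F - smR k G"
  unfolding smR_def by (auto simp: fun_eq_iff algebra_simps)
lemma smR_addk: "smR (k + l) F = smR k F + smR l F"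
  unfolding smR_def by (auto simp: fun_eq_iff algebra_simps)
lemma smR_sumk: "smR (sum f S) F = (\<Sum>x\<in>S. smR (f x) F)"
  unfolding smR_def by (induct S rule: infinite_finite_induct) (auto simp: fun_eq_iff algebra_simps)
lemma smR_sum: "smR k (sum f S) = (\<Sum>x\<in>S. smR k (f x))"
  unfolding smR_def by (induct S rule: infinite_finite_induct) (auto simp: fun_eq_iff algebra_simps)
lemma smR_smR: "smR k (smR l F) = smR (k * l) F"
  unfolding smR_def by (auto simp: fun_eq_iff)
lemma smR_1[simp]: "smR 1 F = F"
  unfolding smR_def by auto
lemma smR_0[simp]: "smR 0 F = 0"
  unfolding smR_def by (auto simp: fun_eq_iff)
lemma smR_zero[simp]: "smR k 0 = 0"
  unfolding smR_def by (auto simp: fun_eq_iff)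

lemma monoR_car: "monoR a b c \<in> carrier R"
  unfolding R_car bnd3_def monoR_def by (intro CollectI exI[of _ "max a (max b c)"]) auto

lemma gL_car: "gL \<in> carrier R" unfolding gL_eq by (rule monoR_car)
lemma gP_car: "gP \<in> carrier R" unfolding gP_eq by (rule monoR_car)
lemma gX_car: "gX \<in> carrier R" unfolding gX_eq by (rule monoR_car)

lemma gL_mono: "gL \<otimes>\<^bsub>R\<^esub> monoR a b c = monoR (Suc a) b c"
proof (intro ext)
  fix c' b' a'
  have "(gL \<otimes>\<^bsub>R\<^esub> monoR a b c) c' b' a' = (if a' = 0 then 0 else monoR a b c c' b' (a' - 1))"
    unfolding gL_mult[OF monoR_car] by (rule refl)
  also have "\<dots> = monoR (Suc a) b c c' b' a'"
    unfolding monoR_def by (cases a') simp_all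
  finally show "(gL \<otimes>\<^bsub>R\<^esub> monoR a b c) c' b' a' = monoR (Suc a) b c c' b' a'" .
qed

lemma gP_mono: "gP \<otimes>\<^bsub>R\<^esub> monoR a b c = smR ((1 / complex_of_real q) ^ a) (monoR a (Suc b) c)"
proof (intro ext)
  fix c' b' a'
  have "(gP \<otimes>\<^bsub>R\<^esub> monoR a b c) c' b' a' = (if b' = 0 then 0 else (1 / complex_of_real q) ^ a' * monoR a b c c' (b' - 1) a')"
    unfolding gP_mult[OF monoR_car] by (rule refl)
  also have "\<dots> = smR ((1 / complex_of_real q) ^ a) (monoR a (Suc b) c) c' b' a'"
    unfolding monoR_def smR_def by (cases b') simp_all
  finally show "(gP \<otimes>\<^bsub>R\<^esub> monoR a b c) c' b' a' = smR ((1 / complex_of_real q) ^ a) (monoR a (Suc b) c) c' b' a'" .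
qed

lemma gX_mono: "gX \<otimes>\<^bsub>R\<^esub> monoR a b c =
   smR (complex_of_real q ^ a * (1 / complex_of_real q) ^ b) (monoR a b (Suc c))
   + smR (kap q hbar * complex_of_real q ^ a * qn q b) (monoR (Suc a) (b - 1) c)"
proof (intro ext)
  fix c' b' a'
  have "(gX \<otimes>\<^bsub>R\<^esub> monoR a b c) c' b' a' =
    (if c' = 0 then 0 else complex_of_real q ^ a' * (1 / complex_of_real q) ^ b' * monoR a b c (c' - 1) b' a')
    + (if a' = 0 then 0 else kap q hbar * complex_of_real q ^ (a' - 1) * qn q (b' + 1) * monoR a b c c' (b' + 1) (a' - 1))"
    unfolding gX_mult[OF monoR_car] by (rule refl)
  also have "\<dots> = (smR (complex_of_real q ^ a * (1 / complex_of_real q) ^ b) (monoR a b (Suc c))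
   + smR (kap q hbar * complex_of_real q ^ a * qn q b) (monoR (Suc a) (b - 1) c)) c' b' a'"
  proof -
    have A: "(if c' = 0 then 0 else complex_of_real q ^ a' * (1 / complex_of_real q) ^ b' * monoR a b c (c' - 1) b' a')
        = smR (complex_of_real q ^ a * (1 / complex_of_real q) ^ b) (monoR a b (Suc c)) c' b' a'"
      unfolding monoR_def smR_def by (cases c') auto
    have B: "(if a' = 0 then 0 else kap q hbar * complex_of_real q ^ (a' - 1) * qn q (b' + 1) * monoR a b c c' (b' + 1) (a' - 1))
        = smR (kap q hbar * complex_of_real q ^ a * qn q b) (monoR (Suc a) (b - 1) c) c' b' a'"
    proof (cases b)
      case 0 then show ?thesis unfolding monoR_def smR_def by (cases a') auto
    next
      case (Suc b0) then show ?thesis unfolding monoR_def smR_def by (cases a') auto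
    qed
    show ?thesis unfolding plus_fun_def A B ..
  qed
  finally show "(gX \<otimes>\<^bsub>R\<^esub> monoR a b c) c' b' a' = (smR (complex_of_real q ^ a * (1 / complex_of_real q) ^ b) (monoR a b (Suc c))
   + smR (kap q hbar * complex_of_real q ^ a * qn q b) (monoR (Suc a) (b - 1) c)) c' b' a'" .
qed


definition gimg :: "hgen \<Rightarrow> nat \<Rightarrow> nat \<Rightarrow> nat \<Rightarrow> complex" where
  "gimg g = (case g of GenX \<Rightarrow> gX | GenP \<Rightarrow> gP | GenL \<Rightarrow> gL)"

definition wimg :: "hgen list \<Rightarrow> nat \<Rightarrow> nat \<Rightarrow> nat \<Rightarrow> complex" where
  "wimg w = foldr (\<lambda>g acc. gimg g \<otimes>\<^bsub>R\<^esub> acc) w (one R)"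

definition hh :: "(hgen list \<Rightarrow> complex) \<Rightarrow> nat \<Rightarrow> nat \<Rightarrow> nat \<Rightarrow> complex" where
  "hh f = (\<Sum>w\<in>{w. f w \<noteq> 0}. smR (f w) (wimg w))"

lemma gimg_car: "gimg g \<in> carrier R"
  unfolding gimg_def using gL_car gP_car gX_car by (cases g) auto

lemma wimg_Nil: "wimg [] = one R" unfolding wimg_def by simp
lemma wimg_Cons: "wimg (g # w) = gimg g \<otimes>\<^bsub>R\<^esub> wimg w" unfolding wimg_def by simp

lemma wimg_car: "wimg w \<in> carrier R"
proof (induct w)
  case Nil show ?case unfolding wimg_Nil by (rule rr.one_closed)
next
  case (Cons g w) show ?case unfolding wimg_Cons by (rule rr.m_closed[OF gimg_car Cons])
qed

lemma wimg_append: "wimg (u @ v) = wimg u \<otimes>\<^bsub>R\<^esub> wimg v"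
proof (induct u)
  case Nil show ?case unfolding append_Nil wimg_Nil by (rule rr.l_one[symmetric, OF wimg_car])
next
  case (Cons g u)
  show ?case unfolding append_Cons wimg_Cons Cons
    by (rule rr.m_assoc[symmetric]) (auto intro: gimg_car wimg_car)
qed

lemma hh_eq: "finite S \<Longrightarrow> {w. f w \<noteq> 0} \<subseteq> S \<Longrightarrow> hh f = (\<Sum>w\<in>S. smR (f w) (wimg w))"
  unfolding hh_def by (rule sum.mono_neutral_left) auto

lemma FA_fin: "f \<in> carrier free_alg \<Longrightarrow> finite {w. f w \<noteq> 0}"
  unfolding FA_car by simp

lemma hh_car: "hh f \<in> carrier R"
  unfolding hh_def by (intro rr.car_sum smR_car wimg_car)

lemma hh_add: "f \<in> carrier free_alg \<Longrightarrow> g \<in> carrier free_alg \<Longrightarrow> hh (f + g) = hh f + hh g"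
proof -
  assume f: "f \<in> carrier free_alg" and g: "g \<in> carrier free_alg"
  let ?S = "{w. f w \<noteq> 0} \<union> {w. g w \<noteq> 0}"
  have fin: "finite ?S" using FA_fin[OF f] FA_fin[OF g] by simp
  have "hh (f + g) = (\<Sum>w\<in>?S. smR ((f + g) w) (wimg w))" by (rule hh_eq[OF fin]) auto
  also have "\<dots> = (\<Sum>w\<in>?S. smR (f w) (wimg w)) + (\<Sum>w\<in>?S. smR (g w) (wimg w))"
    unfolding sum.distrib[symmetric] by (rule sum.cong) (auto simp: smR_addk)
  also have "\<dots> = hh f + hh g" using hh_eq[OF fin, of f] hh_eq[OF fin, of g] by auto
  finally show ?thesis .
qed

lemma hh_sm: "f \<in> carrier free_alg \<Longrightarrow> hh (sm c f) = smR c (hh f)"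
proof -
  assume f: "f \<in> carrier free_alg"
  let ?S = "{w. f w \<noteq> 0}"
  have fin: "finite ?S" using FA_fin[OF f] by simp
  have "hh (sm c f) = (\<Sum>w\<in>?S. smR (sm c f w) (wimg w))" by (rule hh_eq[OF fin]) (auto simp: sm_def)
  also have "\<dots> = smR c (hh f)" unfolding hh_def smR_sum by (rule sum.cong) (auto simp: sm_def smR_smR)
  finally show ?thesis .
qed

lemma hh_fw: "hh (fw u) = wimg u"
proof -
  have "hh (fw u) = (\<Sum>w\<in>{u}. smR (fw u w) (wimg w))" by (rule hh_eq) (auto simp: fw_def)
  then show ?thesis by (simp add: fw_def)
qed

lemma hh_zero: "hh 0 = 0" unfolding hh_def by simp

lemma hh_uminus: "f \<in> carrier free_alg \<Longrightarrow> hh (- f) = - hh f"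
proof -
  assume f: "f \<in> carrier free_alg"
  have "- f = sm (-1) f" unfolding sm_def by (auto simp: fun_eq_iff)
  then have "hh (- f) = smR (-1) (hh f)" using hh_sm[OF f] by simp
  then show ?thesis unfolding smR_def by (auto simp: fun_eq_iff)
qed

lemma hh_diff: "f \<in> carrier free_alg \<Longrightarrow> g \<in> carrier free_alg \<Longrightarrow> hh (f - g) = hh f - hh g"
proof -
  assume f: "f \<in> carrier free_alg" and g: "g \<in> carrier free_alg"
  have mg: "- g \<in> carrier free_alg" using g unfolding FA_car by simp
  have "f - g = f + (- g)" by simp
  then show ?thesis using hh_add[OF f mg] hh_uminus[OF g] by simp
qed

lemma coef_split:
  assumes P: "finite P" and sub: "{w. f w \<noteq> 0} \<times> {w. g w \<noteq> 0} \<subseteq> P"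
  shows "fmul f g w = (\<Sum>p\<in>{p\<in>P. fst p @ snd p = w}. f (fst p) * g (snd p))"
proof -
  let ?spl = "(\<lambda>i. (take i w, drop i w)) ` {..length w}"
  have inj: "inj_on (\<lambda>i. (take i w, drop i w)) {..length w}"
    by (rule inj_onI) (metis Pair_inject atMost_iff length_take min.absorb2)
  have Qsub: "{p\<in>P. fst p @ snd p = w} \<subseteq> ?spl"
  proof
    fix p assume "p \<in> {p\<in>P. fst p @ snd p = w}"
    then have e: "fst p @ snd p = w" by blast
    then have "p = (take (length (fst p)) w, drop (length (fst p)) w)" by (cases p) auto
    moreover have "length (fst p) \<in> {..length w}" using e by auto
    ultimately show "p \<in> ?spl" by blast
  qed
  have "fmul f g w = (\<Sum>p\<in>?spl. f (fst p) * g (snd p))"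
    unfolding fmul_def sum.reindex[OF inj] by simp
  also have "(\<Sum>p\<in>?spl. f (fst p) * g (snd p)) = (\<Sum>p\<in>{p\<in>P. fst p @ snd p = w}. f (fst p) * g (snd p))"
  proof (rule sum.mono_neutral_right)
    show "finite ?spl" by simp
    show "{p\<in>P. fst p @ snd p = w} \<subseteq> ?spl" by (rule Qsub)
    show "\<forall>i\<in>?spl - {p\<in>P. fst p @ snd p = w}. f (fst i) * g (snd i) = 0"
    proof
      fix p assume p: "p \<in> ?spl - {p\<in>P. fst p @ snd p = w}"
      then have "p \<in> ?spl" by blast
      then have app: "fst p @ snd p = w" by auto
      then have "p \<notin> P" using p by blast
      then have "p \<notin> {w. f w \<noteq> 0} \<times> {w. g w \<noteq> 0}" using sub by blast
      then show "f (fst p) * g (snd p) = 0" by (cases p) auto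
    qed
  qed
  finally show ?thesis .
qed

lemma hh_mult: "f \<in> carrier free_alg \<Longrightarrow> g \<in> carrier free_alg \<Longrightarrow> hh (fmul f g) = hh f \<otimes>\<^bsub>R\<^esub> hh g"
proof -
  assume f: "f \<in> carrier free_alg" and g: "g \<in> carrier free_alg"
  define Sf where "Sf = {w. f w \<noteq> 0}"
  define Sg where "Sg = {w. g w \<noteq> 0}"
  define P where "P = Sf \<times> Sg"
  define app where "app = (\<lambda>p::hgen list \<times> hgen list. fst p @ snd p)"
  have fSf: "finite Sf" unfolding Sf_def using FA_fin[OF f] .
  have fSg: "finite Sg" unfolding Sg_def using FA_fin[OF g] .
  have fP: "finite P" unfolding P_def using fSf fSg by simp
  have fQ: "finite (app ` P)" using fP by simp
  have supp: "{w. fmul f g w \<noteq> 0} \<subseteq> app ` P"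
    using fmul_supp[of f g] unfolding P_def Sf_def Sg_def app_def by (auto simp: case_prod_beta)
  have sm_car: "\<And>k w. smR k (wimg w) \<in> carrier R" by (intro smR_car wimg_car)
  have "hh f \<otimes>\<^bsub>R\<^esub> hh g = (\<Sum>u\<in>Sf. smR (f u) (wimg u)) \<otimes>\<^bsub>R\<^esub> (\<Sum>v\<in>Sg. smR (g v) (wimg v))"
    unfolding hh_def Sf_def Sg_def ..
  also have "\<dots> = (\<Sum>u\<in>Sf. smR (f u) (wimg u) \<otimes>\<^bsub>R\<^esub> (\<Sum>v\<in>Sg. smR (g v) (wimg v)))"
    by (rule rr.mult_sum_l) (auto intro: rr.car_sum sm_car)
  also have "\<dots> = (\<Sum>u\<in>Sf. \<Sum>v\<in>Sg. smR (f u) (wimg u) \<otimes>\<^bsub>R\<^esub> smR (g v) (wimg v))"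
    by (rule sum.cong[OF refl]) (rule rr.mult_sum_r; auto intro: sm_car)
  also have "\<dots> = (\<Sum>u\<in>Sf. \<Sum>v\<in>Sg. smR (f u * g v) (wimg (u @ v)))"
    by (intro sum.cong refl) (simp add: smR_mult_l smR_mult_r wimg_car smR_car smR_smR wimg_append rr.m_closed mult.commute)
  also have "\<dots> = (\<Sum>p\<in>P. smR (f (fst p) * g (snd p)) (wimg (app p)))"
    unfolding P_def app_def sum.cartesian_product by (simp add: case_prod_beta)
  also have "\<dots> = (\<Sum>w\<in>app ` P. \<Sum>p\<in>{p. p \<in> P \<and> app p = w}. smR (f (fst p) * g (snd p)) (wimg (app p)))"
    by (rule sum.group[OF fP fQ, symmetric]) simp
  also have "\<dots> = (\<Sum>w\<in>app ` P. smR (fmul f g w) (wimg w))"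
  proof (rule sum.cong[OF refl])
    fix w assume "w \<in> app ` P"
    have "(\<Sum>p\<in>{p. p \<in> P \<and> app p = w}. smR (f (fst p) * g (snd p)) (wimg (app p)))
        = (\<Sum>p\<in>{p. p \<in> P \<and> app p = w}. smR (f (fst p) * g (snd p)) (wimg w))"
      by (rule sum.cong) auto
    also have "\<dots> = smR (\<Sum>p\<in>{p. p \<in> P \<and> app p = w}. f (fst p) * g (snd p)) (wimg w)"
      by (rule smR_sumk[symmetric])
    also have "\<dots> = smR (fmul f g w) (wimg w)"
      using coef_split[OF fP, of f g w] unfolding P_def Sf_def Sg_def app_def by simp
    finally show "(\<Sum>p\<in>{p. p \<in> P \<and> app p = w}. smR (f (fst p) * g (snd p)) (wimg (app p))) = smR (fmul f g w) (wimg w)" .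
  qed
  also have "\<dots> = hh (fmul f g)" by (rule hh_eq[symmetric, OF fQ supp])
  finally show ?thesis ..
qed

lemma hh_hom: "hh \<in> ring_hom free_alg R"
proof (rule ring_hom_memI)
  fix x show "hh x \<in> carrier R" by (rule hh_car)
next
  fix x y assume "x \<in> carrier free_alg" "y \<in> carrier free_alg"
  then show "hh (x \<otimes>\<^bsub>free_alg\<^esub> y) = hh x \<otimes>\<^bsub>R\<^esub> hh y" "hh (x \<oplus>\<^bsub>free_alg\<^esub> y) = hh x \<oplus>\<^bsub>R\<^esub> hh y"
    by (simp_all add: FA_mult hh_mult hh_add)
next
  show "hh \<one>\<^bsub>free_alg\<^esub> = \<one>\<^bsub>R\<^esub>" unfolding FA_one hh_fw wimg_Nil ..
qed

lemma hh_ring_hom_ring: "ring_hom_ring free_alg R hh"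
  by (rule ring_hom_ringI2[OF ring_FA c2.E_ring hh_hom])


abbreviation "Q \<equiv> complex_of_real q"
abbreviation "sq \<equiv> qhalf q"

lemma Q_nz: "Q \<noteq> 0" using qnz by simp
lemma sq_sq: "sq * sq = Q" unfolding qhalf_def by (metis power2_csqrt power2_eq_square)
lemma sq_nz: "sq \<noteq> 0" using sq_sq Q_nz by auto

lemma rels_eq: "heis_rels q hbar =
  {sm sq (fw [GenX, GenP]) - sm (1 / sq) (fw [GenP, GenX]) - sm (\<i> * complex_of_real hbar) (fw [GenL]),
   fw [GenL, GenX] - sm (1 / Q) (fw [GenX, GenL]),
   fw [GenL, GenP] - sm Q (fw [GenP, GenL])}"
  unfolding heis_rels_def Let_def FA_mult fa_gen_eq fw_mult
  by (auto simp: sm_def fun_eq_iff)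

lemma wimg_single: "wimg [g] = gimg g"
  unfolding wimg_Cons wimg_Nil by (rule rr.r_one[OF gimg_car])

lemma wimg_pair: "wimg [g, g'] = gimg g \<otimes>\<^bsub>R\<^esub> gimg g'"
  unfolding wimg_Cons[of g] wimg_single ..

lemma hh_rels: "x \<in> heis_rels q hbar \<Longrightarrow> hh x = 0"
proof -
  have c: "\<And>u k. sm k (fw u) \<in> carrier free_alg" by (intro sm_car fw_car)
  have d: "\<And>f g. f \<in> carrier free_alg \<Longrightarrow> g \<in> carrier free_alg \<Longrightarrow> f - g \<in> carrier free_alg"
    using fa.car_diff by simp
  have h1: "hh (sm sq (fw [GenX, GenP]) - sm (1 / sq) (fw [GenP, GenX]) - sm (\<i> * complex_of_real hbar) (fw [GenL])) = 0"
  proof -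
    have XP: "wimg [GenX, GenP] = smR (1 / Q) (monoR 0 1 1) + smR (kap q hbar) (monoR 1 0 0)"
      unfolding wimg_pair gimg_def gP_eq by (simp add: gX_mono qn_def)
    have PX: "wimg [GenP, GenX] = monoR 0 1 1"
      unfolding wimg_pair gimg_def gX_eq by (simp add: gP_mono)
    have L: "wimg [GenL] = monoR 1 0 0" unfolding wimg_single gimg_def gL_eq by simp
    have e1: "sq / Q = 1 / sq" using sq_sq sq_nz by (auto simp: field_simps)
    have e2: "sq * kap q hbar = \<i> * complex_of_real hbar" unfolding kap_def using sq_nz by simp
    show ?thesis
      using c d
      by (simp add: hh_diff hh_sm fw_car hh_fw XP PX L smR_add smR_smR e1 e2)
  qed
  have h2: "hh (fw [GenL, GenX] - sm (1 / Q) (fw [GenX, GenL])) = 0"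
  proof -
    have LX: "wimg [GenL, GenX] = monoR 1 0 1"
      unfolding wimg_pair gimg_def gX_eq by (simp add: gL_mono)
    have XL: "wimg [GenX, GenL] = smR Q (monoR 1 0 1)"
      unfolding wimg_pair gimg_def gL_eq by (simp add: gX_mono)
    show ?thesis using c Q_nz by (simp add: hh_diff hh_sm fw_car hh_fw LX XL smR_smR)
  qed
  have h3: "hh (fw [GenL, GenP] - sm Q (fw [GenP, GenL])) = 0"
  proof -
    have LP: "wimg [GenL, GenP] = monoR 1 1 0"
      unfolding wimg_pair gimg_def gP_eq by (simp add: gL_mono)
    have PL: "wimg [GenP, GenL] = smR (1 / Q) (monoR 1 1 0)"
      unfolding wimg_pair gimg_def gL_eq by (simp add: gP_mono)
    show ?thesis using c Q_nz by (simp add: hh_diff hh_sm fw_car hh_fw LP PL smR_smR)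
  qed
  assume "x \<in> heis_rels q hbar"
  then show "hh x = 0" unfolding rels_eq using h1 h2 h3 by blast
qed

lemma rels_car: "heis_rels q hbar \<subseteq> carrier free_alg"
  unfolding rels_eq using fw_car sm_car fa.car_diff by auto

abbreviation "II \<equiv> genideal free_alg (heis_rels q hbar)"

lemma II_ideal: "ideal II free_alg"
  by (rule ring.genideal_ideal[OF ring_FA rels_car])

lemma II_sub_ker: "II \<subseteq> a_kernel free_alg R hh"
proof (rule ring.genideal_minimal[OF ring_FA])
  show "ideal (a_kernel free_alg R hh) free_alg"
    by (rule ring_hom_ring.kernel_is_ideal[OF hh_ring_hom_ring])
  show "heis_rels q hbar \<subseteq> a_kernel free_alg R hh"
    unfolding a_kernel_def' using rels_car hh_rels by auto
qed


lemma II_asg: "additive_subgroup II free_alg"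
  by (rule ideal.axioms(1)[OF II_ideal])

lemma II_sub: "x \<in> II \<Longrightarrow> x \<in> carrier free_alg"
  using additive_subgroup.a_subset[OF II_asg] by blast

lemma II_0: "0 \<in> II"
  using additive_subgroup.zero_closed[OF II_asg] by simp

lemma II_add: "x \<in> II \<Longrightarrow> y \<in> II \<Longrightarrow> x + y \<in> II"
  using additive_subgroup.a_closed[OF II_asg, of x y] by simp

lemma II_neg: "x \<in> II \<Longrightarrow> - x \<in> II"
  using additive_subgroup.a_inv_closed[OF II_asg, of x] fa.oneg_eq[OF II_sub, of x] by simp

lemma II_diff: "x \<in> II \<Longrightarrow> y \<in> II \<Longrightarrow> x - y \<in> II"
  using II_add[OF _ II_neg, of x y] by simp

lemma II_lmul: "x \<in> II \<Longrightarrow> g \<in> carrier free_alg \<Longrightarrow> fmul g x \<in> II"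
  using ideal.I_l_closed[OF II_ideal, of x g] by (simp add: FA_mult)

lemma II_rmul: "x \<in> II \<Longrightarrow> g \<in> carrier free_alg \<Longrightarrow> fmul x g \<in> II"
  using ideal.I_r_closed[OF II_ideal, of x g] by (simp add: FA_mult)

lemma fa_scalar_car: "fa_scalar c \<in> carrier free_alg"
  unfolding fa_scalar_eq by (rule sm_car[OF fw_car])

lemma II_sm: "x \<in> II \<Longrightarrow> sm c x \<in> II"
  using II_lmul[OF _ fa_scalar_car, of x c] by (simp add: fmul_scalar_l)

lemma II_sum: "(\<And>x. x \<in> S \<Longrightarrow> f x \<in> II) \<Longrightarrow> sum f S \<in> II"
proof (induct S rule: infinite_finite_induct)
  case (insert x F) show ?case unfolding sum.insert[OF insert(1,2)] by (rule II_add) (use insert in auto)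
qed (simp_all add: II_0)

lemma rels_II: "heis_rels q hbar \<subseteq> II"
  by (rule ring.genideal_self[OF ring_FA rels_car])

definition cg :: "(hgen list \<Rightarrow> complex) \<Rightarrow> (hgen list \<Rightarrow> complex) \<Rightarrow> bool" where
  "cg f g \<longleftrightarrow> f - g \<in> II"

lemma cg_refl: "cg f f" unfolding cg_def using II_0 by simp
lemma cg_sym: "cg f g \<Longrightarrow> cg g f" unfolding cg_def using II_neg by fastforce
lemma cg_trans: "cg f g \<Longrightarrow> cg g h \<Longrightarrow> cg f h"
  unfolding cg_def using II_add by fastforce
lemma cg_add: "cg f g \<Longrightarrow> cg f' g' \<Longrightarrow> cg (f + f') (g + g')"
  unfolding cg_def using II_add by (fastforce simp: algebra_simps)
lemma cg_sm: "cg f g \<Longrightarrow> cg (sm c f) (sm c g)"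
  unfolding cg_def using II_sm by (fastforce simp: sm_diff[symmetric])
lemma cg_lmul: "cg f g \<Longrightarrow> h \<in> carrier free_alg \<Longrightarrow> cg (fmul h f) (fmul h g)"
  unfolding cg_def using II_lmul by (fastforce simp: fmul_diff_r[symmetric])
lemma cg_rmul: "cg f g \<Longrightarrow> h \<in> carrier free_alg \<Longrightarrow> cg (fmul f h) (fmul g h)"
  unfolding cg_def using II_rmul by (fastforce simp: fmul_diff_l[symmetric])
lemma cg_eq: "f = g \<Longrightarrow> cg f g" using cg_refl by simp

lemma cg_ctx: "cg f g \<Longrightarrow> cg (fmul (fw u) (fmul f (fw v))) (fmul (fw u) (fmul g (fw v)))"
  by (intro cg_lmul cg_rmul fw_car)

abbreviation "rq \<equiv> 1 / Q"

lemma C1: "cg (fw [GenP, GenL]) (sm rq (fw [GenL, GenP]))"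
proof -
  have "fw [GenP, GenL] - sm rq (fw [GenL, GenP]) = sm (- rq) (fw [GenL, GenP] - sm Q (fw [GenP, GenL]))"
    using Q_nz by (auto simp: sm_def fun_eq_iff field_simps)
  moreover have "fw [GenL, GenP] - sm Q (fw [GenP, GenL]) \<in> II" using rels_II rels_eq by blast
  ultimately show ?thesis unfolding cg_def using II_sm by simp
qed

lemma C2: "cg (fw [GenX, GenL]) (sm Q (fw [GenL, GenX]))"
proof -
  have "fw [GenX, GenL] - sm Q (fw [GenL, GenX]) = sm (- Q) (fw [GenL, GenX] - sm rq (fw [GenX, GenL]))"
    using Q_nz by (auto simp: sm_def fun_eq_iff field_simps)
  moreover have "fw [GenL, GenX] - sm rq (fw [GenX, GenL]) \<in> II" using rels_II rels_eq by blast
  ultimately show ?thesis unfolding cg_def using II_sm by simp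
qed

lemma C3: "cg (fw [GenX, GenP]) (sm rq (fw [GenP, GenX]) + sm (kap q hbar) (fw [GenL]))"
proof -
  have "fw [GenX, GenP] - (sm rq (fw [GenP, GenX]) + sm (kap q hbar) (fw [GenL])) =
    sm (1 / sq) (sm sq (fw [GenX, GenP]) - sm (1 / sq) (fw [GenP, GenX]) - sm (\<i> * complex_of_real hbar) (fw [GenL]))"
  proof -
    have alg: "x - (1 / Qv * y + \<i> * h / s * z) = 1 / s * (s * x - 1 / s * y - \<i> * h * z)"
      if "s \<noteq> 0" "Qv = s * s" for s Qv h x y z :: complex
      using that by (simp add: field_simps)
    show ?thesis unfolding sm_def fun_eq_iff kap_def using alg[OF sq_nz sq_sq[symmetric]] by simp
  qed
  moreover have "sm sq (fw [GenX, GenP]) - sm (1 / sq) (fw [GenP, GenX]) - sm (\<i> * complex_of_real hbar) (fw [GenL]) \<in> II"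
    using rels_II rels_eq by blast
  ultimately show ?thesis unfolding cg_def using II_sm by simp
qed

lemma ctx_fw: "fmul (fw u) (fmul (fw w) (fw v)) = fw (u @ w @ v)"
  by (simp add: fw_mult)

lemma ctx_sm: "fmul (fw u) (fmul (sm c f) (fw v)) = sm c (fmul (fw u) (fmul f (fw v)))"
  by (simp add: fmul_sm_l fmul_sm_r)

lemma ctx_add: "fmul (fw u) (fmul (f + g) (fw v)) = fmul (fw u) (fmul f (fw v)) + fmul (fw u) (fmul g (fw v))"
  by (simp add: fmul_add_l fmul_add_r)

lemmas ctx_simps = ctx_fw ctx_sm ctx_add

lemma cg_ctxw: "cg (fw w) g \<Longrightarrow> cg (fw (u @ w @ v)) (fmul (fw u) (fmul g (fw v)))"
  using cg_ctx[of "fw w" g u v] by (simp add: fw_mult)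

abbreviation "Ls n \<equiv> replicate n GenL"
abbreviation "Ps n \<equiv> replicate n GenP"
abbreviation "Xs n \<equiv> replicate n GenX"

lemma rep_snoc: "replicate (Suc n) x = replicate n x @ [x]"
  by (simp add: replicate_append_same)

lemma rep_cons: "replicate n x @ x # w = x # replicate n x @ w"
  by (induct n) auto

lemma PLa: "cg (fw (GenP # Ls a)) (sm (rq ^ a) (fw (Ls a @ [GenP])))"
proof (induct a)
  case 0 show ?case by (simp add: cg_refl)
next
  case (Suc a)
  have s1: "cg (fw ([] @ (GenP # Ls a) @ [GenL])) (sm (rq ^ a) (fw (Ls a @ [GenP] @ [GenL])))"
    using cg_ctxw[OF Suc, of "[]" "[GenL]"] by (simp add: ctx_simps)
  have s2: "cg (fw (Ls a @ [GenP, GenL] @ [])) (sm rq (fw (Ls a @ [GenL, GenP] @ [])))"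
    using cg_ctxw[OF C1, of "Ls a" "[]"] by (simp add: ctx_simps)
  have s2': "cg (sm (rq ^ a) (fw (Ls a @ [GenP] @ [GenL]))) (sm (rq ^ Suc a) (fw (Ls (Suc a) @ [GenP])))"
    using cg_sm[OF s2, of "rq ^ a"] by (simp add: sm_sm rep_snoc rep_cons mult.commute)
  show ?case using cg_trans[OF s1 s2'] by (simp add: rep_snoc rep_cons)
qed

lemma XLa: "cg (fw (GenX # Ls a)) (sm (Q ^ a) (fw (Ls a @ [GenX])))"
proof (induct a)
  case 0 show ?case by (simp add: cg_refl)
next
  case (Suc a)
  have s1: "cg (fw ([] @ (GenX # Ls a) @ [GenL])) (sm (Q ^ a) (fw (Ls a @ [GenX] @ [GenL])))"
    using cg_ctxw[OF Suc, of "[]" "[GenL]"] by (simp add: ctx_simps)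
  have s2: "cg (fw (Ls a @ [GenX, GenL] @ [])) (sm Q (fw (Ls a @ [GenL, GenX] @ [])))"
    using cg_ctxw[OF C2, of "Ls a" "[]"] by (simp add: ctx_simps)
  have s2': "cg (sm (Q ^ a) (fw (Ls a @ [GenX] @ [GenL]))) (sm (Q ^ Suc a) (fw (Ls (Suc a) @ [GenX])))"
    using cg_sm[OF s2, of "Q ^ a"] by (simp add: sm_sm rep_snoc rep_cons mult.commute)
  show ?case using cg_trans[OF s1 s2'] by (simp add: rep_snoc rep_cons)
qed

lemma PbL: "cg (fw (Ps b @ [GenL])) (sm (rq ^ b) (fw (GenL # Ps b)))"
proof (induct b)
  case 0 show ?case by (simp add: cg_refl)
next
  case (Suc b)
  have s1: "cg (fw ([GenP] @ (Ps b @ [GenL]) @ [])) (sm (rq ^ b) (fw ([GenP] @ (GenL # Ps b) @ [])))"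
    using cg_ctxw[OF Suc, of "[GenP]" "[]"] by (simp add: ctx_simps)
  have s2: "cg (fw ([] @ [GenP, GenL] @ Ps b)) (sm rq (fw ([] @ [GenL, GenP] @ Ps b)))"
    using cg_ctxw[OF C1, of "[]" "Ps b"] by (simp add: ctx_simps)
  have s2': "cg (sm (rq ^ b) (fw ([GenP] @ (GenL # Ps b) @ []))) (sm (rq ^ Suc b) (fw (GenL # Ps (Suc b))))"
    using cg_sm[OF s2, of "rq ^ b"] by (simp add: sm_sm mult.commute)
  show ?case using cg_trans[OF s1 s2'] by simp
qed


lemma qn_Suc: "qn q (Suc b) = qn q b + rq ^ b * rq ^ b"
  unfolding qn_def sum.lessThan_Suc mult_2 power_add ..

lemma XPb: "cg (fw (GenX # Ps b)) (sm (rq ^ b) (fw (Ps b @ [GenX])) + sm (kap q hbar * qn q b) (fw (GenL # Ps (b - 1))))"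
proof (induct b)
  case 0 show ?case by (simp add: cg_refl)
next
  case (Suc b)
  let ?k = "kap q hbar"
  have s1: "cg (fw (GenX # Ps b @ [GenP]))
     (sm (rq ^ b) (fw (Ps b @ [GenX, GenP])) + sm (?k * qn q b) (fw (GenL # Ps (b - 1) @ [GenP])))"
    using cg_ctxw[OF Suc, of "[]" "[GenP]"] by (simp only: ctx_simps append.simps append_assoc)
  have e: "sm (?k * qn q b) (fw (GenL # Ps (b - 1) @ [GenP])) = sm (?k * qn q b) (fw (GenL # Ps b))"
    by (cases b) (simp_all add: replicate_append_same)
  have s2: "cg (fw (Ps b @ [GenX, GenP])) (sm rq (fw (Ps b @ [GenP, GenX])) + sm ?k (fw (Ps b @ [GenL])))"
    using cg_ctxw[OF C3, of "Ps b" "[]"] by (simp only: ctx_simps append.simps append_assoc append_Nil2)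
  have s3: "cg (sm ?k (fw (Ps b @ [GenL]))) (sm (?k * rq ^ b) (fw (GenL # Ps b)))"
    using cg_sm[OF PbL, of ?k] by (simp add: sm_sm)
  have s23: "cg (fw (Ps b @ [GenX, GenP])) (sm rq (fw (Ps (Suc b) @ [GenX])) + sm (?k * rq ^ b) (fw (GenL # Ps b)))"
  proof -
    have "cg (sm rq (fw (Ps b @ [GenP, GenX])) + sm ?k (fw (Ps b @ [GenL])))
              (sm rq (fw (Ps b @ [GenP, GenX])) + sm (?k * rq ^ b) (fw (GenL # Ps b)))"
      by (rule cg_add[OF cg_refl s3])
    note h = cg_trans[OF s2 this]
    have eqw: "fw (Ps b @ [GenP, GenX]) = fw (Ps (Suc b) @ [GenX])" by (simp add: rep_cons)
    show ?thesis using h unfolding eqw .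
  qed
  have s4: "cg (sm (rq ^ b) (fw (Ps b @ [GenX, GenP])))
     (sm (rq ^ Suc b) (fw (Ps (Suc b) @ [GenX])) + sm (?k * rq ^ b * rq ^ b) (fw (GenL # Ps b)))"
    using cg_sm[OF s23, of "rq ^ b"] by (simp add: sm_add sm_sm mult.commute mult.left_commute)
  have s5: "cg (fw (GenX # Ps (Suc b)))
     (sm (rq ^ Suc b) (fw (Ps (Suc b) @ [GenX])) + sm (?k * rq ^ b * rq ^ b) (fw (GenL # Ps b))
      + sm (?k * qn q b) (fw (GenL # Ps b)))"
  proof -
    have "cg (fw (GenX # Ps (Suc b))) (sm (rq ^ b) (fw (Ps b @ [GenX, GenP])) + sm (?k * qn q b) (fw (GenL # Ps b)))"
      using s1 e by (simp add: replicate_append_same)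
    moreover have "cg (sm (rq ^ b) (fw (Ps b @ [GenX, GenP])) + sm (?k * qn q b) (fw (GenL # Ps b)))
       (sm (rq ^ Suc b) (fw (Ps (Suc b) @ [GenX])) + sm (?k * rq ^ b * rq ^ b) (fw (GenL # Ps b))
        + sm (?k * qn q b) (fw (GenL # Ps b)))"
      by (rule cg_add[OF s4 cg_refl])
    ultimately show ?thesis by (rule cg_trans)
  qed
  have e2: "sm (?k * rq ^ b * rq ^ b) (fw (GenL # Ps b)) + sm (?k * qn q b) (fw (GenL # Ps b))
      = sm (?k * qn q (Suc b)) (fw (GenL # Ps b))"
    unfolding qn_Suc sm_def by (auto simp: fun_eq_iff algebra_simps)
  show ?case using s5 unfolding add.assoc e2 diff_Suc_1 .
qed


definition wabc :: "nat \<Rightarrow> nat \<Rightarrow> nat \<Rightarrow> hgen list" where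
  "wabc a b c = Ls a @ Ps b @ Xs c"

definition cnt :: "hgen \<Rightarrow> hgen list \<Rightarrow> nat" where
  "cnt g w = length (filter (\<lambda>x. x = g) w)"

definition nf :: "(nat \<Rightarrow> nat \<Rightarrow> nat \<Rightarrow> complex) \<Rightarrow> hgen list \<Rightarrow> complex" where
  "nf F = (\<lambda>w. if w = wabc (cnt GenL w) (cnt GenP w) (cnt GenX w)
      then F (cnt GenX w) (cnt GenP w) (cnt GenL w) else 0)"

lemma cnt_wabc[simp]: "cnt GenL (wabc a b c) = a" "cnt GenP (wabc a b c) = b" "cnt GenX (wabc a b c) = c"
  unfolding cnt_def wabc_def by (auto simp: filter_replicate)

lemma nf_wabc: "nf F (wabc a b c) = F c b a"
  unfolding nf_def by simp

lemma nf_add: "nf (F + G) = nf F + nf G"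
  unfolding nf_def by (auto simp: fun_eq_iff)
lemma nf_smR: "nf (smR k F) = sm k (nf F)"
  unfolding nf_def smR_def sm_def by (auto simp: fun_eq_iff)
lemma nf_zero: "nf 0 = 0"
  unfolding nf_def by (auto simp: fun_eq_iff)
lemma nf_diff: "nf (F - G) = nf F - nf G"
  unfolding nf_def by (auto simp: fun_eq_iff)
lemma nf_sum: "nf (sum F S) = (\<Sum>x\<in>S. nf (F x))"
proof (induct S rule: infinite_finite_induct)
  case (insert x S) show ?case unfolding sum.insert[OF insert(1,2)] nf_add insert(3) ..
next
  case (infinite S) show ?case unfolding sum.infinite[OF infinite] nf_zero ..
next
  case empty show ?case unfolding sum.empty nf_zero ..
qed

lemma nf_mono: "nf (monoR a b c) = fw (wabc a b c)"
proof
  fix w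
  show "nf (monoR a b c) w = fw (wabc a b c) w"
  proof (cases "w = wabc (cnt GenL w) (cnt GenP w) (cnt GenX w)")
    case True
    then show ?thesis unfolding nf_def monoR_def fw_def
      by (metis (full_types) cnt_wabc)
  next
    case False
    then have "w \<noteq> wabc a b c" by (metis cnt_wabc)
    then show ?thesis using False unfolding nf_def fw_def by simp
  qed
qed

abbreviation "box n \<equiv> {..n} \<times> {..n} \<times> {..(n::nat)}"

lemma R_decomp: "bnd3 n F \<Longrightarrow> F = (\<Sum>(c, b, a)\<in>box n. smR (F c b a) (monoR a b c))"
proof (intro ext)
  fix c' b' a' assume n: "bnd3 n F"
  have "(\<Sum>(c, b, a)\<in>box n. smR (F c b a) (monoR a b c)) c' b' a'
      = (\<Sum>t\<in>box n. if t = (c', b', a') then F c' b' a' else 0)"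
    unfolding sum_fun_apply by (rule sum.cong) (auto simp: smR_def monoR_def split: if_splits)
  also have "\<dots> = F c' b' a'" using n unfolding bnd3_def by (auto simp: not_le)
  finally show "F c' b' a' = (\<Sum>(c, b, a)\<in>box n. smR (F c b a) (monoR a b c)) c' b' a'" ..
qed

lemma nf_decomp: "bnd3 n F \<Longrightarrow> nf F = (\<Sum>(c, b, a)\<in>box n. sm (F c b a) (fw (wabc a b c)))"
proof -
  assume n: "bnd3 n F"
  have "nf F = nf (\<Sum>(c, b, a)\<in>box n. smR (F c b a) (monoR a b c))" using R_decomp[OF n] by simp
  also have "\<dots> = (\<Sum>(c, b, a)\<in>box n. sm (F c b a) (fw (wabc a b c)))"
    unfolding nf_sum by (rule sum.cong) (auto simp: nf_smR nf_mono)
  finally show ?thesis .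
qed

lemma fa_sum_car: "(\<And>x. x \<in> S \<Longrightarrow> f x \<in> carrier free_alg) \<Longrightarrow> sum f S \<in> carrier free_alg"
  by (rule fa.car_sum)

lemma nf_car: "F \<in> carrier R \<Longrightarrow> nf F \<in> carrier free_alg"
proof -
  assume "F \<in> carrier R"
  then obtain n where n: "bnd3 n F" unfolding R_car by blast
  show ?thesis unfolding nf_decomp[OF n] by (rule fa_sum_car) (auto intro: sm_car fw_car)
qed

lemma hh_sum: "(\<And>x. x \<in> S \<Longrightarrow> f x \<in> carrier free_alg) \<Longrightarrow> hh (sum f S) = (\<Sum>x\<in>S. hh (f x))"
proof (induct S rule: infinite_finite_induct)
  case (insert x S)
  have "hh (sum f (insert x S)) = hh (f x + sum f S)" unfolding sum.insert[OF insert(1,2)] ..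
  also have "\<dots> = hh (f x) + hh (sum f S)"
    by (rule hh_add) (use insert in \<open>auto intro: fa_sum_car\<close>)
  also have "\<dots> = (\<Sum>x\<in>insert x S. hh (f x))" using insert by simp
  finally show ?case .
qed (simp_all add: hh_zero)

lemma wimg_Xs: "wimg (Xs c) = monoR 0 0 c"
proof (induct c)
  case 0 show ?case using wimg_Nil R_one by simp
next
  case (Suc c)
  show ?case unfolding replicate_Suc wimg_Cons Suc by (simp add: gimg_def gX_mono qn_def)
qed

lemma wimg_PsXs: "wimg (Ps b @ Xs c) = monoR 0 b c"
proof (induct b)
  case 0 show ?case using wimg_Xs by simp
next
  case (Suc b)
  show ?case unfolding replicate_Suc append_Cons wimg_Cons Suc by (simp add: gimg_def gP_mono)
qed

lemma wimg_wabc: "wimg (wabc a b c) = monoR a b c"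
  unfolding wabc_def
proof (induct a)
  case 0 show ?case using wimg_PsXs by simp
next
  case (Suc a)
  show ?case unfolding replicate_Suc append_Cons wimg_Cons Suc by (simp add: gimg_def gL_mono)
qed

lemma hh_nf: "F \<in> carrier R \<Longrightarrow> hh (nf F) = F"
proof -
  assume "F \<in> carrier R"
  then obtain n where n: "bnd3 n F" unfolding R_car by blast
  have "hh (nf F) = (\<Sum>(c, b, a)\<in>box n. hh (sm (F c b a) (fw (wabc a b c))))"
    unfolding nf_decomp[OF n] by (subst hh_sum) (auto intro: sm_car fw_car simp: case_prod_beta)
  also have "\<dots> = (\<Sum>(c, b, a)\<in>box n. smR (F c b a) (monoR a b c))"
    by (rule sum.cong) (auto simp: hh_sm fw_car hh_fw wimg_wabc)
  also have "\<dots> = F" using R_decomp[OF n] by simp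
  finally show ?thesis .
qed


lemma cg_sum: "(\<And>x. x \<in> S \<Longrightarrow> cg (f x) (g x)) \<Longrightarrow> cg (sum f S) (sum g S)"
proof -
  assume h: "\<And>x. x \<in> S \<Longrightarrow> cg (f x) (g x)"
  have "sum f S - sum g S = (\<Sum>x\<in>S. f x - g x)" by (simp add: sum_subtractf)
  moreover have "(\<Sum>x\<in>S. f x - g x) \<in> II" using h unfolding cg_def by (intro II_sum)
  ultimately show ?thesis unfolding cg_def by simp
qed

lemma MLm: "cg (fmul (fw [GenL]) (fw (wabc a b c))) (nf (gL \<otimes>\<^bsub>R\<^esub> monoR a b c))"
  unfolding gL_mono nf_mono fw_mult by (rule cg_eq) (simp add: wabc_def)

lemma MPm: "cg (fmul (fw [GenP]) (fw (wabc a b c))) (nf (gP \<otimes>\<^bsub>R\<^esub> monoR a b c))"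
proof -
  have "cg (fw ([] @ (GenP # Ls a) @ (Ps b @ Xs c))) (fmul (fw []) (fmul (sm (rq ^ a) (fw (Ls a @ [GenP]))) (fw (Ps b @ Xs c))))"
    by (rule cg_ctxw[OF PLa])
  moreover have "fmul (fw []) (fmul (sm (rq ^ a) (fw (Ls a @ [GenP]))) (fw (Ps b @ Xs c))) = sm (rq ^ a) (fw (wabc a (Suc b) c))"
    unfolding ctx_sm ctx_fw by (simp add: wabc_def)
  moreover have "fw ([] @ (GenP # Ls a) @ (Ps b @ Xs c)) = fmul (fw [GenP]) (fw (wabc a b c))"
    unfolding fw_mult by (simp add: wabc_def)
  moreover have "nf (gP \<otimes>\<^bsub>R\<^esub> monoR a b c) = sm (rq ^ a) (fw (wabc a (Suc b) c))"
    unfolding gP_mono nf_smR nf_mono ..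
  ultimately show ?thesis by simp
qed

lemma MXm: "cg (fmul (fw [GenX]) (fw (wabc a b c))) (nf (gX \<otimes>\<^bsub>R\<^esub> monoR a b c))"
proof -
  let ?k = "kap q hbar"
  have s1: "cg (fw ([] @ (GenX # Ls a) @ (Ps b @ Xs c))) (fmul (fw []) (fmul (sm (Q ^ a) (fw (Ls a @ [GenX]))) (fw (Ps b @ Xs c))))"
    by (rule cg_ctxw[OF XLa])
  have e1: "fw ([] @ (GenX # Ls a) @ (Ps b @ Xs c)) = fmul (fw [GenX]) (fw (wabc a b c))"
    unfolding fw_mult by (simp add: wabc_def)
  have e2: "fmul (fw []) (fmul (sm (Q ^ a) (fw (Ls a @ [GenX]))) (fw (Ps b @ Xs c))) = sm (Q ^ a) (fw (Ls a @ (GenX # Ps b) @ Xs c))"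
    unfolding ctx_sm ctx_fw by simp
  have s2: "cg (fw (Ls a @ (GenX # Ps b) @ Xs c))
      (fmul (fw (Ls a)) (fmul (sm (rq ^ b) (fw (Ps b @ [GenX])) + sm (?k * qn q b) (fw (GenL # Ps (b - 1)))) (fw (Xs c))))"
    by (rule cg_ctxw[OF XPb])
  have e3: "fmul (fw (Ls a)) (fmul (sm (rq ^ b) (fw (Ps b @ [GenX])) + sm (?k * qn q b) (fw (GenL # Ps (b - 1)))) (fw (Xs c)))
     = sm (rq ^ b) (fw (wabc a b (Suc c))) + sm (?k * qn q b) (fw (wabc (Suc a) (b - 1) c))"
    unfolding ctx_add ctx_sm ctx_fw by (simp add: wabc_def rep_cons)
  have s3: "cg (sm (Q ^ a) (fw (Ls a @ (GenX # Ps b) @ Xs c)))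
     (sm (Q ^ a * rq ^ b) (fw (wabc a b (Suc c))) + sm (?k * Q ^ a * qn q b) (fw (wabc (Suc a) (b - 1) c)))"
    using cg_sm[OF s2[unfolded e3], of "Q ^ a"] by (simp add: sm_add sm_sm mult.commute mult.left_commute)
  have e4: "nf (gX \<otimes>\<^bsub>R\<^esub> monoR a b c) =
     sm (Q ^ a * rq ^ b) (fw (wabc a b (Suc c))) + sm (?k * Q ^ a * qn q b) (fw (wabc (Suc a) (b - 1) c))"
    unfolding gX_mono nf_add nf_smR nf_mono ..
  show ?thesis using cg_trans[OF s1[unfolded e1 e2] s3] unfolding e4 .
qed

lemma Mg: "F \<in> carrier R \<Longrightarrow> cg (fmul (fw [g]) (nf F)) (nf (gimg g \<otimes>\<^bsub>R\<^esub> F))"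
proof -
  assume F: "F \<in> carrier R"
  then obtain n where n: "bnd3 n F" unfolding R_car by blast
  have mono: "cg (fmul (fw [g]) (fw (wabc a b c))) (nf (gimg g \<otimes>\<^bsub>R\<^esub> monoR a b c))" for a b c
    unfolding gimg_def using MLm MPm MXm by (cases g) auto
  have sc: "\<And>k a b c. smR k (monoR a b c) \<in> carrier R" by (intro smR_car monoR_car)
  have "fmul (fw [g]) (nf F) = (\<Sum>(c, b, a)\<in>box n. sm (F c b a) (fmul (fw [g]) (fw (wabc a b c))))"
    unfolding nf_decomp[OF n] fmul_sum_r by (rule sum.cong) (auto simp: fmul_sm_r)
  moreover have "nf (gimg g \<otimes>\<^bsub>R\<^esub> F) = (\<Sum>(c, b, a)\<in>box n. sm (F c b a) (nf (gimg g \<otimes>\<^bsub>R\<^esub> monoR a b c)))"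
  proof -
    have "gimg g \<otimes>\<^bsub>R\<^esub> F = gimg g \<otimes>\<^bsub>R\<^esub> (\<Sum>(c, b, a)\<in>box n. smR (F c b a) (monoR a b c))"
      using R_decomp[OF n] by simp
    also have "\<dots> = (\<Sum>t\<in>box n. gimg g \<otimes>\<^bsub>R\<^esub> (case t of (c, b, a) \<Rightarrow> smR (F c b a) (monoR a b c)))"
      by (rule rr.mult_sum_r[OF gimg_car]) (auto simp: sc)
    also have "\<dots> = (\<Sum>(c, b, a)\<in>box n. smR (F c b a) (gimg g \<otimes>\<^bsub>R\<^esub> monoR a b c))"
      by (rule sum.cong) (auto simp: smR_mult_r gimg_car monoR_car)
    finally have eq: "gimg g \<otimes>\<^bsub>R\<^esub> F = (\<Sum>(c, b, a)\<in>box n. smR (F c b a) (gimg g \<otimes>\<^bsub>R\<^esub> monoR a b c))" .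
    show ?thesis unfolding eq nf_sum by (rule sum.cong) (auto simp: nf_smR)
  qed
  ultimately show ?thesis using mono by (auto intro!: cg_sum cg_sm)
qed

lemma cg_word: "cg (fw w) (nf (wimg w))"
proof (induct w)
  case Nil show ?case unfolding wimg_Nil R_one nf_mono by (rule cg_eq) (simp add: wabc_def)
next
  case (Cons g w)
  have "fw (g # w) = fmul (fw [g]) (fw w)" by (simp add: fw_mult)
  moreover have "cg (fmul (fw [g]) (fw w)) (fmul (fw [g]) (nf (wimg w)))"
    by (rule cg_lmul[OF Cons fw_car])
  moreover have "cg (fmul (fw [g]) (nf (wimg w))) (nf (wimg (g # w)))"
    unfolding wimg_Cons by (rule Mg[OF wimg_car])
  ultimately show ?case using cg_trans by metis
qed

lemma cg_nf: "f \<in> carrier free_alg \<Longrightarrow> cg f (nf (hh f))"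
proof -
  assume f: "f \<in> carrier free_alg"
  have "nf (hh f) = (\<Sum>w\<in>{w. f w \<noteq> 0}. sm (f w) (nf (wimg w)))"
    unfolding hh_def nf_sum by (rule sum.cong) (auto simp: nf_smR)
  moreover have "cg (\<Sum>w\<in>{w. f w \<noteq> 0}. sm (f w) (fw w)) (\<Sum>w\<in>{w. f w \<noteq> 0}. sm (f w) (nf (wimg w)))"
    by (intro cg_sum cg_sm cg_word)
  ultimately show ?thesis using FA_decomp[OF f] by simp
qed

lemma ker_sub_II: "a_kernel free_alg R hh \<subseteq> II"
proof
  fix f assume "f \<in> a_kernel free_alg R hh"
  then have f: "f \<in> carrier free_alg" and h: "hh f = 0" unfolding a_kernel_def' by auto
  have "cg f (nf 0)" using cg_nf[OF f] h by simp
  then show "f \<in> II" unfolding cg_def nf_zero by simp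
qed

lemma ker_eq: "a_kernel free_alg R hh = II"
  using ker_sub_II II_sub_ker by blast

lemma hh_surj: "hh ` carrier free_alg = carrier R"
proof
  show "hh ` carrier free_alg \<subseteq> carrier R" using hh_car by blast
  show "carrier R \<subseteq> hh ` carrier free_alg"
  proof
    fix F assume F: "F \<in> carrier R"
    then show "F \<in> hh ` carrier free_alg" using hh_nf[OF F] nf_car[OF F] by force
  qed
qed


lemma F3: "sp q (ore_const C_ring c) = ore_const C_ring c"
  unfolding sp_def c0.ore_const_eq by (auto simp: fun_eq_iff)

lemma F5: "sp q L1 = ore_const C_ring (complex_of_real (1 / q)) \<otimes>\<^bsub>A1\<^esub> L1"
  unfolding c0.const_mult[OF cC L1_car] unfolding L1_eq sp_def by (auto simp: fun_eq_iff)

lemma G3: "sx q (cc2 c) = cc2 c" unfolding cc2_eq sx_def by (auto simp: fun_eq_iff)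
lemma G4: "dx q hbar (cc2 c) = \<zero>\<^bsub>A2 q\<^esub>" unfolding A2_zero cc2_eq dx_def by (auto simp: fun_eq_iff)
lemma G5: "sx q L2 = cc2 (complex_of_real q) \<otimes>\<^bsub>A2 q\<^esub> L2"
  unfolding cc2_mult[OF L2_car] unfolding L2_eq sx_def by (auto simp: fun_eq_iff)
lemma G6: "dx q hbar L2 = \<zero>\<^bsub>A2 q\<^esub>" unfolding A2_zero L2_eq dx_def by (auto simp: fun_eq_iff)
lemma G7: "sx q P2 = cc2 (complex_of_real (1 / q)) \<otimes>\<^bsub>A2 q\<^esub> P2"
  unfolding cc2_mult[OF P2_car] unfolding P2_eq sx_def by (auto simp: fun_eq_iff)
lemma G8: "dx q hbar P2 = cc2 (\<i> * complex_of_real hbar / qhalf q) \<otimes>\<^bsub>A2 q\<^esub> L2"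
  unfolding cc2_mult[OF L2_car] unfolding P2_eq L2_eq dx_def kap_def by (auto simp: fun_eq_iff qn_def)

lemma Heis_eq: "Heis q hbar = free_alg Quot (a_kernel free_alg R hh)"
  unfolding Heis_def ker_eq ..

lemma H1: "(\<lambda>X. the_elem (hh ` X)) \<in> ring_iso (Heis q hbar) R"
  unfolding Heis_eq by (rule ring_hom_ring.FactRing_iso_set[OF hh_ring_hom_ring hh_surj])

lemma Hval: "f \<in> carrier free_alg \<Longrightarrow> the_elem (hh ` (heis_class q hbar f)) = hh f"
  unfolding heis_class_def ker_eq[symmetric] by (rule ring_hom_ring.the_elem_simp[OF hh_ring_hom_ring])

lemma H2: "the_elem (hh ` (heis_class q hbar (fa_scalar c))) = ore_const (A2 q) (cc2 c)"
proof -
  have "hh (fa_scalar c) = smR c (monoR 0 0 0)"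
    unfolding fa_scalar_eq hh_sm[OF fw_car] hh_fw wimg_Nil R_one ..
  then show ?thesis unfolding Hval[OF fa_scalar_car] scR_eq .
qed

lemma H3: "the_elem (hh ` (heis_class q hbar (fa_gen g))) = gimg g"
  unfolding Hval[OF fa_gen_eq[symmetric, THEN subst, of "\<lambda>x. x \<in> carrier free_alg", OF fw_car]]
  unfolding fa_gen_eq hh_fw wimg_single ..

end

theorem mainTheorem1:
  fixes q hbar :: real
  assumes "q \<noteq> 0"
  shows
   "let A1 = ore_ext C_ring id (\<lambda>_. 0);
        c1 = ore_const C_ring;
        L1 = ore_var C_ring
    in ring A1 \<and>
       (\<exists>\<sigma>p \<delta>p.
          \<sigma>p \<in> ring_iso A1 A1 \<and> sigma_derivation A1 \<sigma>p \<delta>p \<and>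
          (\<forall>c. \<sigma>p (c1 c) = c1 c \<and> \<delta>p (c1 c) = \<zero>\<^bsub>A1\<^esub>) \<and>
          \<sigma>p L1 = c1 (complex_of_real (1 / q)) \<otimes>\<^bsub>A1\<^esub> L1 \<and>
          \<delta>p L1 = \<zero>\<^bsub>A1\<^esub> \<and>
          (let A2 = ore_ext A1 \<sigma>p \<delta>p;
               c2 = (\<lambda>c. ore_const A1 (c1 c));
               L2 = ore_const A1 L1;
               P2 = ore_var A1
           in ring A2 \<and>
              (\<exists>\<sigma>x \<delta>x.
                 \<sigma>x \<in> ring_iso A2 A2 \<and> sigma_derivation A2 \<sigma>x \<delta>x \<and>
                 (\<forall>c. \<sigma>x (c2 c) = c2 c \<and> \<delta>x (c2 c) = \<zero>\<^bsub>A2\<^esub>) \<and>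
                 \<sigma>x L2 = c2 (complex_of_real q) \<otimes>\<^bsub>A2\<^esub> L2 \<and>
                 \<delta>x L2 = \<zero>\<^bsub>A2\<^esub> \<and>
                 \<sigma>x P2 = c2 (complex_of_real (1 / q)) \<otimes>\<^bsub>A2\<^esub> P2 \<and>
                 \<delta>x P2 = c2 (\<i> * complex_of_real hbar / qhalf q) \<otimes>\<^bsub>A2\<^esub> L2 \<and>
                 (let R = ore_ext A2 \<sigma>x \<delta>x
                  in ring R \<and>
                     (\<exists>\<phi>. \<phi> \<in> ring_iso (Heis q hbar) R \<and>
                        (\<forall>c. \<phi> (heis_class q hbar (fa_scalar c)) = ore_const A2 (c2 c)) \<and>
                        \<phi> (heis_class q hbar (fa_gen GenX)) = ore_var A2 \<and>
                        \<phi> (heis_class q hbar (fa_gen GenP)) = ore_const A2 P2 \<and>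
                        \<phi> (heis_class q hbar (fa_gen GenL)) = ore_const A2 L2)))))"
proof -
  interpret Q: qnz q hbar by unfold_locales (rule assms)
  show ?thesis
    unfolding Let_def
    apply (rule conjI, rule A1_ring)
    apply (rule exI[of _ "sp q"], rule exI[of _ "\<lambda>_. 0"])
    apply (intro conjI allI)
    apply (rule sp_iso[OF assms])
    apply (rule sp_der)
    apply (rule Q.F3)
    apply (simp only: A1_zero)
    apply (rule Q.F5)
    apply (simp only: A1_zero)
    apply (rule c1.E_ring)
    apply (rule exI[of _ "sx q"], rule exI[of _ "dx q hbar"])
    apply (intro conjI allI)
    apply (rule sx_iso[OF assms])
    apply (rule dx_der[OF assms])
    apply (rule Q.G3)
    apply (rule Q.G4)
    apply (rule Q.G5)
    apply (rule Q.G6)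
    apply (rule Q.G7)
    apply (rule Q.G8)
    apply (rule Q.c2.E_ring)
    apply (rule exI[of _ "\<lambda>X. the_elem (Q.hh ` X)"])
    apply (intro conjI allI)
    apply (rule Q.H1)
    apply (rule Q.H2)
    using Q.H3[of GenX] Q.H3[of GenP] Q.H3[of GenL] unfolding Q.gimg_def
    apply simp_all
    done
qed

end
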